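(* Let $\mathcal Q$ be a unary query on $p$-labelled graphs that is computable by a rational piecewise linear GNN. Then $\mathcal Q$ is definable in $\mathsf{GFO{+}C}$.
   Context: Graphs are finite, simple, undirected, with nonempty vertex set. A $p$-labelled graph is $(G,\mathbf b)$ with $\mathbf b:V(G)\to\{0,1\}^p$. A unary query $\mathcal Q$ assigns to each $(G,\mathbf b)$ a map $\mathcal Q(G,\mathbf b):V(G)\to\{0,1\}$, invariant under label-preserving isomorphisms. A dyadic rational is a rational whose denominator is a power of $2$. A piecewise linear function $L:\mathbb R\to\mathbb R$ (finitely many pieces) is rational if all thresholds, slopes and constant terms of its minimal representation are dyadic rationals. An FNN $\mathfrak F=(V,E,(\mathfrak a_v),(w_e),(b_v))$ has a finite dag skeleton, activations $\mathfrak a_v$, weights $w_e$, biases $b_v$; sources are inputs, sinks outputs; a non-input node computes $\mathfrak a_v(b_v+\sum_{uv\in E}w_{uv}\cdot\text{value}(u))$. It is rational piecewise linear if all weights and biases are dyadic rationals and all activations are continuous rational piecewise linear functions. A GNN layer $(\mathrm{msg},\mathrm{agg},\mathrm{comb})$, with $\mathrm{msg},\mathrm{comb}$ computed by FNNs and $\mathrm{agg}\in\{$sum, mean, max$\}$ (coordinatewise, $\mathbf 0$ on empty multisets), maps $\mathcal x:V(G)\to\mathbb R^p$ to $\mathcal y(v)=\mathrm{comb}(\mathcal x(v),\mathrm{agg}\{\!\{\mathrm{msg}(\mathcal x(v),\mathcal x(w)):w\in N(v)\}\!\})$. A GNN is a finite composition of layers; $\tilde{\mathfrak N}(G,\mathcal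 x)$ is its output signal. It is rational piecewise linear if all its FNNs are. A GNN $\mathfrak N$ (input dimension $p$, output dimension $1$) computes $\mathcal Q$ if for all $(G,\mathbf b)$ and $v$: $\tilde{\mathfrak N}(G,\mathbf b)(v)\ge3/4$ if $\mathcal Q(G,\mathbf b)(v)=1$ and $\le1/4$ if $\mathcal Q(G,\mathbf b)(v)=0$. Logic: $(G,\mathbf b)$ is the structure with universe $V(G)$, binary $E$, unary $P_i=\{v:\mathbf b(v)_i=1\}$. Two sorts: vertex variables (over $V(G)$) and number variables (over $\mathbb N$). $\mathsf{GFO{+}C}$ uses only vertex variables $x_1,x_2$. Terms: number variables, $0$, $1$, $\mathrm{ord}$ (value $|V(G)|$), $\theta+\theta'$, $\theta\cdot\theta'$, counting terms. Formulas: $\theta\le\theta'$, $E(x_i,x_j)$, $P_k(x_i)$, $x_i=x_j$, $\neg\varphi$, $\varphi\wedge\psi$. Counting terms: $\#(x_{3-i},y_1<\theta_1,\dots,y_k<\theta_k).(\gamma\wedge\varphi)$ with guard $\gamma$ equal to $E(x_i,x_{3-i})$ or $E(x_{3-i},x_i)$, and $\#(y_1<\theta_1,\dots,y_k<\theta_k).\varphi$. A counting term $\#(z_1..z_m,y_1<\theta_1,..,y_k<\theta_k).\psi$ evaluates to the number of tuples $(c_1..c_m,b_1..b_k)$ of vertices and naturals with each $b_j$ below the value of $\theta_j$ under the assignment extended by $z\mapsto c$, $y_1..y_{j-1}\mapsto b_1..b_{j-1}$, and satisfying $\psi$ under the assignment extended by all of them (these variables become bound). $\mathcal Q$ is definable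 in $\mathsf{GFO{+}C}$ if there is a formula $\varphi(x_1)$ with only free variable $x_1$ such that $(G,\mathbf b)\models\varphi(v)\iff\mathcal Q(G,\mathbf b)(v)=1$ for all $(G,\mathbf b),v$. *)

theory Defs
  imports Complex_Main
begin

text \<open>A p-labelling is b :: nat => nat => bool where
  b v i (for i < p) is the i-th bit of the label of v (bits i >= p are ignored).\<close>

definition graph :: "nat set \<Rightarrow> (nat \<Rightarrow> nat \<Rightarrow> bool) \<Rightarrow> bool" where
  "graph V E \<longleftrightarrow> finite V \<and> V \<noteq> {} \<and> (\<forall>u w. E u w \<longrightarrow> u \<in> V \<and> w \<in> V)
     \<and> (\<forall>u w. E u w \<longrightarrow> E w u) \<and> (\<forall>u. \<not> E u u)"

type_synonym query = "nat set \<Rightarrow> (nat \<Rightarrow> nat \<Rightarrow> bool) \<Rightarrow> (nat \<Rightarrow> nat \<Rightarrow> bool) \<Rightarrow> nat \<Rightarrow> bool"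

definition unary_query :: "nat \<Rightarrow> query \<Rightarrow> bool" where
  "unary_query p Q \<longleftrightarrow>
    (\<forall>V1 E1 b1 V2 E2 b2 f. graph V1 E1 \<longrightarrow> graph V2 E2 \<longrightarrow> bij_betw f V1 V2 \<longrightarrow>
       (\<forall>u\<in>V1. \<forall>w\<in>V1. E1 u w \<longleftrightarrow> E2 (f u) (f w)) \<longrightarrow>
       (\<forall>u\<in>V1. \<forall>i<p. b1 u i = b2 (f u) i) \<longrightarrow>
       (\<forall>v\<in>V1. Q V1 E1 b1 v = Q V2 E2 b2 (f v)))"

definition dyadic :: "real \<Rightarrow> bool" where
  "dyadic x \<longleftrightarrow> (\<exists>(a::int) (k::nat). x = of_int a / 2 ^ k)"

text \<open>Thresholds t_1 < ... < t_m; on the piece [t_j, t_(j+1)) (with t_0 = -inf,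
  t_(m+1) = +inf) the function is x |-> sl ! j * x + cs ! j, where j is the number of
  thresholds <= x.\<close>
definition piece_index :: "real list \<Rightarrow> real \<Rightarrow> nat" where
  "piece_index ts x = length (filter (\<lambda>t. t \<le> x) ts)"

definition rat_pwl :: "(real \<Rightarrow> real) \<Rightarrow> bool" where
  "rat_pwl L \<longleftrightarrow> (\<exists>ts sl cs. sorted_wrt (<) ts \<and> length sl = Suc (length ts)
     \<and> length cs = Suc (length ts)
     \<and> (\<forall>t\<in>set ts. dyadic t) \<and> (\<forall>a\<in>set sl. dyadic a) \<and> (\<forall>c\<in>set cs. dyadic c)
     \<and> (\<forall>x. L x = sl ! piece_index ts x * x + cs ! piece_index ts x))"

text \<open>Nodes are 0..<fnodes (numbered in a topological order of the dag: edges go from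
  smaller to larger nodes). The input nodes are listed (in order) in fins, the output
  nodes in fouts.\<close>
record fnn =
  fnodes :: nat
  fedges :: "(nat \<times> nat) set"
  fwt :: "nat \<Rightarrow> nat \<Rightarrow> real"
  fbias :: "nat \<Rightarrow> real"
  fact :: "nat \<Rightarrow> real \<Rightarrow> real"
  fins :: "nat list"
  fouts :: "nat list"

definition fnn_wf :: "fnn \<Rightarrow> bool" where
  "fnn_wf F \<longleftrightarrow> fedges F \<subseteq> {(u, v). u < v \<and> v < fnodes F}
     \<and> distinct (fins F) \<and> distinct (fouts F)
     \<and> set (fins F) = {v. v < fnodes F \<and> \<not> (\<exists>u. (u, v) \<in> fedges F)}
     \<and> set (fouts F) = {v. v < fnodes F \<and> \<not> (\<exists>w. (v, w) \<in> fedges F)}"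

fun fnn_vals :: "fnn \<Rightarrow> real list \<Rightarrow> nat \<Rightarrow> real list" where
  "fnn_vals F x 0 = []"
| "fnn_vals F x (Suc k) =
     (let vs = fnn_vals F x k in
      vs @ [if k \<in> set (fins F) then x ! (THE j. j < length (fins F) \<and> fins F ! j = k)
            else fact F k (fbias F k + (\<Sum>u\<in>{u. u < k \<and> (u, k) \<in> fedges F}. fwt F u k * vs ! u))])"

definition fnn_eval :: "fnn \<Rightarrow> real list \<Rightarrow> real list" where
  "fnn_eval F x = map (\<lambda>v. fnn_vals F x (fnodes F) ! v) (fouts F)"

definition fnn_rpwl :: "fnn \<Rightarrow> bool" where
  "fnn_rpwl F \<longleftrightarrow> (\<forall>(u, v)\<in>fedges F. dyadic (fwt F u v))
     \<and> (\<forall>v<fnodes F. v \<notin> set (fins F) \<longrightarrow>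
          dyadic (fbias F v) \<and> continuous_on UNIV (fact F v) \<and> rat_pwl (fact F v))"

datatype aggr = AggSum | AggMean | AggMax

record gnn_layer =
  lmsg :: fnn
  lagg :: aggr
  lcomb :: fnn

fun aggregate :: "aggr \<Rightarrow> nat \<Rightarrow> nat set \<Rightarrow> (nat \<Rightarrow> real list) \<Rightarrow> real list" where
  "aggregate AggSum d N m = map (\<lambda>i. \<Sum>w\<in>N. m w ! i) [0..<d]"
| "aggregate AggMean d N m =
     map (\<lambda>i. if N = {} then 0 else (\<Sum>w\<in>N. m w ! i) / real (card N)) [0..<d]"
| "aggregate AggMax d N m =
     map (\<lambda>i. if N = {} then 0 else Max ((\<lambda>w. m w ! i) ` N)) [0..<d]"

definition layer_wf :: "nat \<Rightarrow> nat \<Rightarrow> gnn_layer \<Rightarrow> bool" where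
  "layer_wf p q L \<longleftrightarrow> fnn_wf (lmsg L) \<and> fnn_wf (lcomb L)
     \<and> length (fins (lmsg L)) = 2 * p
     \<and> length (fins (lcomb L)) = p + length (fouts (lmsg L))
     \<and> length (fouts (lcomb L)) = q"

definition apply_layer :: "nat set \<Rightarrow> (nat \<Rightarrow> nat \<Rightarrow> bool) \<Rightarrow> gnn_layer
    \<Rightarrow> (nat \<Rightarrow> real list) \<Rightarrow> (nat \<Rightarrow> real list)" where
  "apply_layer V E L x = (\<lambda>v. fnn_eval (lcomb L)
      (x v @ aggregate (lagg L) (length (fouts (lmsg L))) {w \<in> V. E v w}
               (\<lambda>w. fnn_eval (lmsg L) (x v @ x w))))"

type_synonym gnn = "gnn_layer list"

fun gnn_wf :: "nat \<Rightarrow> nat \<Rightarrow> gnn \<Rightarrow> bool" where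
  "gnn_wf p q [] \<longleftrightarrow> p = q"
| "gnn_wf p q (L # Ls) \<longleftrightarrow> (\<exists>r. layer_wf p r L \<and> gnn_wf r q Ls)"

fun apply_gnn :: "nat set \<Rightarrow> (nat \<Rightarrow> nat \<Rightarrow> bool) \<Rightarrow> gnn
    \<Rightarrow> (nat \<Rightarrow> real list) \<Rightarrow> (nat \<Rightarrow> real list)" where
  "apply_gnn V E [] x = x"
| "apply_gnn V E (L # Ls) x = apply_gnn V E Ls (apply_layer V E L x)"

definition gnn_rpwl :: "gnn \<Rightarrow> bool" where
  "gnn_rpwl N \<longleftrightarrow> (\<forall>L\<in>set N. fnn_rpwl (lmsg L) \<and> fnn_rpwl (lcomb L))"

definition label_signal :: "nat \<Rightarrow> (nat \<Rightarrow> nat \<Rightarrow> bool) \<Rightarrow> nat \<Rightarrow> real list" where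
  "label_signal p b = (\<lambda>v. map (\<lambda>i. if b v i then 1 else 0) [0..<p])"

definition gnn_computes :: "nat \<Rightarrow> gnn \<Rightarrow> query \<Rightarrow> bool" where
  "gnn_computes p N Q \<longleftrightarrow> gnn_wf p 1 N \<and>
     (\<forall>V E b v. graph V E \<longrightarrow> v \<in> V \<longrightarrow>
        (Q V E b v \<longrightarrow> apply_gnn V E N (label_signal p b) v ! 0 \<ge> 3/4) \<and>
        (\<not> Q V E b v \<longrightarrow> apply_gnn V E N (label_signal p b) v ! 0 \<le> 1/4))"

definition rpwl_gnn_computable :: "nat \<Rightarrow> query \<Rightarrow> bool" where
  "rpwl_gnn_computable p Q \<longleftrightarrow> (\<exists>N. gnn_rpwl N \<and> gnn_computes p N Q)"

datatype vvar = X1 | X2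

fun other :: "vvar \<Rightarrow> vvar" where
  "other X1 = X2" | "other X2 = X1"

text \<open>CntG i g bs phi is the guarded counting term #(x_{3-i}, bs).(gamma \<and> phi) with
  guard gamma = E(x_i, x_{3-i}) if g, and E(x_{3-i}, x_i) otherwise.
  Cnt bs phi is #(bs).phi. A list of bounds BCons y theta bs stands for
  y < theta, followed by the bounds bs.\<close>
datatype nterm = NVar nat | NZero | NOne | NOrd | NPlus nterm nterm | NTimes nterm nterm
  | CntG vvar bool bnds form
  | Cnt bnds form
and bnds = BNil | BCons nat nterm bnds
and form = FLe nterm nterm | FEdge vvar vvar | FPred nat vvar | FEq vvar vvar
  | FNot form | FAnd form form

function (sequential) evalt :: "nat set \<Rightarrow> (nat \<Rightarrow> nat \<Rightarrow> bool) \<Rightarrow> (nat \<Rightarrow> nat \<Rightarrow> bool)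
      \<Rightarrow> (vvar \<Rightarrow> nat) \<Rightarrow> (nat \<Rightarrow> nat) \<Rightarrow> nterm \<Rightarrow> nat"
and cntb :: "nat set \<Rightarrow> (nat \<Rightarrow> nat \<Rightarrow> bool) \<Rightarrow> (nat \<Rightarrow> nat \<Rightarrow> bool)
      \<Rightarrow> (vvar \<Rightarrow> nat) \<Rightarrow> (nat \<Rightarrow> nat) \<Rightarrow> bnds \<Rightarrow> form \<Rightarrow> nat"
and sat :: "nat set \<Rightarrow> (nat \<Rightarrow> nat \<Rightarrow> bool) \<Rightarrow> (nat \<Rightarrow> nat \<Rightarrow> bool)
      \<Rightarrow> (vvar \<Rightarrow> nat) \<Rightarrow> (nat \<Rightarrow> nat) \<Rightarrow> form \<Rightarrow> bool"
where
  "evalt V E b \<alpha> \<beta> (NVar y) = \<beta> y"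
| "evalt V E b \<alpha> \<beta> NZero = 0"
| "evalt V E b \<alpha> \<beta> NOne = 1"
| "evalt V E b \<alpha> \<beta> NOrd = card V"
| "evalt V E b \<alpha> \<beta> (NPlus s t) = evalt V E b \<alpha> \<beta> s + evalt V E b \<alpha> \<beta> t"
| "evalt V E b \<alpha> \<beta> (NTimes s t) = evalt V E b \<alpha> \<beta> s * evalt V E b \<alpha> \<beta> t"
| "evalt V E b \<alpha> \<beta> (CntG i g bs \<phi>) =
     (\<Sum>c\<in>V. let \<alpha>' = \<alpha>(other i := c) in
        if (if g then E (\<alpha>' i) (\<alpha>' (other i)) else E (\<alpha>' (other i)) (\<alpha>' i))
        then cntb V E b \<alpha>' \<beta> bs \<phi> else 0)"
| "evalt V E b \<alpha> \<beta> (Cnt bs \<phi>) = cntb V E b \<alpha> \<beta> bs \<phi>"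
| "cntb V E b \<alpha> \<beta> BNil \<phi> = (if sat V E b \<alpha> \<beta> \<phi> then 1 else 0)"
| "cntb V E b \<alpha> \<beta> (BCons y t bs) \<phi> =
     (\<Sum>n<evalt V E b \<alpha> \<beta> t. cntb V E b \<alpha> (\<beta>(y := n)) bs \<phi>)"
| "sat V E b \<alpha> \<beta> (FLe s t) \<longleftrightarrow> evalt V E b \<alpha> \<beta> s \<le> evalt V E b \<alpha> \<beta> t"
| "sat V E b \<alpha> \<beta> (FEdge i j) \<longleftrightarrow> E (\<alpha> i) (\<alpha> j)"
| "sat V E b \<alpha> \<beta> (FPred k i) \<longleftrightarrow> b (\<alpha> i) k"
| "sat V E b \<alpha> \<beta> (FEq i j) \<longleftrightarrow> \<alpha> i = \<alpha> j"
| "sat V E b \<alpha> \<beta> (FNot \<phi>) \<longleftrightarrow> \<not> sat V E b \<alpha> \<beta> \<phi>"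
| "sat V E b \<alpha> \<beta> (FAnd \<phi> \<psi>) \<longleftrightarrow> sat V E b \<alpha> \<beta> \<phi> \<and> sat V E b \<alpha> \<beta> \<psi>"
  by pat_completeness auto
termination
  by (relation "measure (\<lambda>x. case x of
        Inl (_, _, _, _, _, t) \<Rightarrow> 2 * size t
      | Inr (Inl (_, _, _, _, _, bs, \<phi>)) \<Rightarrow> 2 * (size bs + size \<phi>) + 1
      | Inr (Inr (_, _, _, _, _, \<phi>)) \<Rightarrow> 2 * size \<phi>)") auto

fun fvt :: "nterm \<Rightarrow> vvar set" and fvb :: "bnds \<Rightarrow> vvar set" and fvf :: "form \<Rightarrow> vvar set"
where
  "fvt (NVar y) = {}" | "fvt NZero = {}" | "fvt NOne = {}" | "fvt NOrd = {}"
| "fvt (NPlus s t) = fvt s \<union> fvt t" | "fvt (NTimes s t) = fvt s \<union> fvt t"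
| "fvt (CntG i g bs \<phi>) = insert i ((fvb bs \<union> fvf \<phi>) - {other i})"
| "fvt (Cnt bs \<phi>) = fvb bs \<union> fvf \<phi>"
| "fvb BNil = {}" | "fvb (BCons y t bs) = fvt t \<union> fvb bs"
| "fvf (FLe s t) = fvt s \<union> fvt t" | "fvf (FEdge i j) = {i, j}" | "fvf (FPred k i) = {i}"
| "fvf (FEq i j) = {i, j}" | "fvf (FNot \<phi>) = fvf \<phi>" | "fvf (FAnd \<phi> \<psi>) = fvf \<phi> \<union> fvf \<psi>"

text \<open>Free number variables (the y's of a counting term are bound in later bounds and
  in the body).\<close>
function (sequential) fnt :: "nterm \<Rightarrow> nat set" and fnb :: "bnds \<Rightarrow> form \<Rightarrow> nat set" and fnf :: "form \<Rightarrow> nat set"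
where
  "fnt (NVar y) = {y}" | "fnt NZero = {}" | "fnt NOne = {}" | "fnt NOrd = {}"
| "fnt (NPlus s t) = fnt s \<union> fnt t" | "fnt (NTimes s t) = fnt s \<union> fnt t"
| "fnt (CntG i g bs \<phi>) = fnb bs \<phi>"
| "fnt (Cnt bs \<phi>) = fnb bs \<phi>"
| "fnb BNil \<phi> = fnf \<phi>" | "fnb (BCons y t bs) \<phi> = fnt t \<union> (fnb bs \<phi> - {y})"
| "fnf (FLe s t) = fnt s \<union> fnt t" | "fnf (FEdge i j) = {}" | "fnf (FPred k i) = {}"
| "fnf (FEq i j) = {}" | "fnf (FNot \<phi>) = fnf \<phi>" | "fnf (FAnd \<phi> \<psi>) = fnf \<phi> \<union> fnf \<psi>"
  by pat_completeness auto
termination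
  by (relation "measure (\<lambda>x. case x of
        Inl t \<Rightarrow> 2 * size t
      | Inr (Inl (bs, \<phi>)) \<Rightarrow> 2 * (size bs + size \<phi>) + 1
      | Inr (Inr \<phi>) \<Rightarrow> 2 * size \<phi>)") auto

text \<open>Indices of unary label predicates P_k occurring (0-based: P_k tests bit k).\<close>
fun pst :: "nterm \<Rightarrow> nat set" and psb :: "bnds \<Rightarrow> nat set" and psf :: "form \<Rightarrow> nat set"
where
  "pst (NVar y) = {}" | "pst NZero = {}" | "pst NOne = {}" | "pst NOrd = {}"
| "pst (NPlus s t) = pst s \<union> pst t" | "pst (NTimes s t) = pst s \<union> pst t"
| "pst (CntG i g bs \<phi>) = psb bs \<union> psf \<phi>"
| "pst (Cnt bs \<phi>) = psb bs \<union> psf \<phi>"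
| "psb BNil = {}" | "psb (BCons y t bs) = pst t \<union> psb bs"
| "psf (FLe s t) = pst s \<union> pst t" | "psf (FEdge i j) = {}" | "psf (FPred k i) = {k}"
| "psf (FEq i j) = {}" | "psf (FNot \<phi>) = psf \<phi>" | "psf (FAnd \<phi> \<psi>) = psf \<phi> \<union> psf \<psi>"

definition gfoc_definable :: "nat \<Rightarrow> query \<Rightarrow> bool" where
  "gfoc_definable p Q \<longleftrightarrow> (\<exists>\<phi>. fvf \<phi> \<subseteq> {X1} \<and> fnf \<phi> = {} \<and> psf \<phi> \<subseteq> {..<p} \<and>
     (\<forall>V E b v \<alpha> \<beta>. graph V E \<longrightarrow> v \<in> V \<longrightarrow> \<alpha> X1 = v \<longrightarrow>
        (sat V E b \<alpha> \<beta> \<phi> \<longleftrightarrow> Q V E b v)))"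

end

theory Submission
  imports Defs
begin

lemma fn_indep:
 "(\<forall>y\<in>fnt t. \<beta> y = \<beta>' y) \<Longrightarrow> evalt V E b \<alpha> \<beta> t = evalt V E b \<alpha> \<beta>' t"
 "(\<forall>y\<in>fnb bs \<phi>. \<beta> y = \<beta>' y) \<Longrightarrow> cntb V E b \<alpha> \<beta> bs \<phi> = cntb V E b \<alpha> \<beta>' bs \<phi>"
 "(\<forall>y\<in>fnf \<phi>. \<beta> y = \<beta>' y) \<Longrightarrow> sat V E b \<alpha> \<beta> \<phi> = sat V E b \<alpha> \<beta>' \<phi>"
proof (induction V E b \<alpha> \<beta> t and V E b \<alpha> \<beta> bs \<phi> and V E b \<alpha> \<beta> \<phi> arbitrary: \<beta>' and \<beta>' and \<beta>' rule: evalt_cntb_sat.induct)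
  case (5 V E b \<alpha> \<beta> s t)
  then show ?case using "5.IH"(1)[of \<beta>'] "5.IH"(2)[of \<beta>'] by simp
next
  case (6 V E b \<alpha> \<beta> s t)
  then show ?case using "6.IH"(1)[of \<beta>'] "6.IH"(2)[of \<beta>'] by simp
next
  case (7 V E b \<alpha> \<beta> i g bs \<phi>)
  have h2: "\<forall>y\<in>fnb bs \<phi>. \<beta> y = \<beta>' y" using 7(2) by simp
  have IH: "cntb V E b (\<alpha>(other i := x)) \<beta> bs \<phi> = cntb V E b (\<alpha>(other i := x)) \<beta>' bs \<phi>"
      if "x\<in>V" and "if g then E ((\<alpha>(other i := x)) i) ((\<alpha>(other i := x)) (other i)) else E ((\<alpha>(other i := x)) (other i)) ((\<alpha>(other i := x)) i)" for x
    by (rule 7(1)[OF that(1) refl that(2) h2])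
  show ?case unfolding evalt.simps Let_def
    apply (rule sum.cong[OF refl])
    subgoal for x using IH[of x] by (cases g) auto
    done
next
  case (8 V E b \<alpha> \<beta> bs \<phi>)
  then show ?case using "8.IH"[of \<beta>'] by simp
next
  case (9 V E b \<alpha> \<beta> \<phi>)
  then show ?case using "9.IH"[of \<beta>'] by simp
next
  case (10 V E b \<alpha> \<beta> y t bs \<phi>)
  have et: "evalt V E b \<alpha> \<beta> t = evalt V E b \<alpha> \<beta>' t" using "10.IH"(1)[of \<beta>'] "10.prems" by simp
  have en: "cntb V E b \<alpha> (\<beta>(y:=n)) bs \<phi> = cntb V E b \<alpha> (\<beta>'(y:=n)) bs \<phi>"
      if "n \<in> {..<evalt V E b \<alpha> \<beta> t}" for n
      by (rule "10.IH"(2)[OF that]) (use "10.prems" in auto)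
  show ?case
      unfolding cntb.simps et[symmetric] by (rule sum.cong[OF refl en])
next
  case (11 V E b \<alpha> \<beta> s t)
  then show ?case using "11.IH"(1)[of \<beta>'] "11.IH"(2)[of \<beta>'] by simp
next
  case (15 V E b \<alpha> \<beta> \<phi>)
  then show ?case using "15.IH"[of \<beta>'] by simp
next
  case (16 V E b \<alpha> \<beta> \<phi> \<psi>)
  then show ?case using "16.IH"(1)[of \<beta>'] "16.IH"(2)[of \<beta>'] by simp
qed simp_all

fun swt :: "nterm \<Rightarrow> nterm" and swb :: "bnds \<Rightarrow> bnds" and swf :: "form \<Rightarrow> form" where
  "swt (NVar y) = NVar y" | "swt NZero = NZero" | "swt NOne = NOne" | "swt NOrd = NOrd"
| "swt (NPlus s t) = NPlus (swt s) (swt t)" | "swt (NTimes s t) = NTimes (swt s) (swt t)"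
| "swt (CntG i g bs \<phi>) = CntG (other i) g (swb bs) (swf \<phi>)"
| "swt (Cnt bs \<phi>) = Cnt (swb bs) (swf \<phi>)"
| "swb BNil = BNil" | "swb (BCons y t bs) = BCons y (swt t) (swb bs)"
| "swf (FLe s t) = FLe (swt s) (swt t)" | "swf (FEdge i j) = FEdge (other i) (other j)"
| "swf (FPred k i) = FPred k (other i)" | "swf (FEq i j) = FEq (other i) (other j)"
| "swf (FNot \<phi>) = FNot (swf \<phi>)" | "swf (FAnd \<phi> \<psi>) = FAnd (swf \<phi>) (swf \<psi>)"

lemma other_other[simp]: "other (other i) = i" by (cases i) auto
lemma other_inj[simp]: "other x = other y \<longleftrightarrow> x = y" by (cases x; cases y) auto
lemma other_neq[simp]: "other i \<noteq> i" "i \<noteq> other i" by (cases i; simp)+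

lemma comp_other_upd2: "(\<alpha>(i := c)) \<circ> other = (\<alpha> \<circ> other)(other i := c)"
  by (rule ext) (auto simp: comp_def)

lemma sw_eval:
 "evalt V E b \<alpha> \<beta> (swt t) = evalt V E b (\<alpha> \<circ> other) \<beta> t"
 "cntb V E b \<alpha> \<beta> (swb bs) (swf \<phi>) = cntb V E b (\<alpha> \<circ> other) \<beta> bs \<phi>"
 "sat V E b \<alpha> \<beta> (swf \<phi>) = sat V E b (\<alpha> \<circ> other) \<beta> \<phi>"
proof (induction V E b "\<alpha> \<circ> other" \<beta> t and V E b "\<alpha> \<circ> other" \<beta> bs \<phi> and V E b "\<alpha> \<circ> other" \<beta> \<phi> arbitrary: \<alpha> and \<alpha> and \<alpha> rule: evalt_cntb_sat.induct)
  case (7 V E b \<beta> i g bs \<phi> \<alpha>)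
  show ?case 
    apply (simp add: Let_def)
    apply (rule sum.cong, simp)
    subgoal for x using 7(1)[OF _ comp_other_upd2] by (auto simp: comp_other_upd2)
    done
qed (auto simp: comp_def intro!: sum.cong)

lemma sw_fn: "fnt (swt t) = fnt t" "fnb (swb bs) (swf \<phi>) = fnb bs \<phi>" "fnf (swf \<phi>) = fnf \<phi>"
  by (induction t and bs \<phi> and \<phi> rule: fnt_fnb_fnf.induct) auto

lemma sw_ps: "pst (swt t) = pst t" "psb (swb bs) = psb bs" "psf (swf \<phi>) = psf \<phi>"
  by (induction t and bs and \<phi> rule: pst_psb_psf.induct) auto


definition okt :: "nat \<Rightarrow> vvar set \<Rightarrow> nterm \<Rightarrow> bool" where
  "okt p S t \<longleftrightarrow> fvt t \<subseteq> S \<and> fnt t = {} \<and> pst t \<subseteq> {..<p}"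
definition okf :: "nat \<Rightarrow> vvar set \<Rightarrow> form \<Rightarrow> bool" where
  "okf p S \<phi> \<longleftrightarrow> fvf \<phi> \<subseteq> S \<and> fnf \<phi> = {} \<and> psf \<phi> \<subseteq> {..<p}"

abbreviation ev :: "nat set \<Rightarrow> (nat \<Rightarrow> nat \<Rightarrow> bool) \<Rightarrow> (nat \<Rightarrow> nat \<Rightarrow> bool) \<Rightarrow> (vvar \<Rightarrow> nat) \<Rightarrow> nterm \<Rightarrow> nat" where
  "ev V E b \<alpha> t \<equiv> evalt V E b \<alpha> (\<lambda>_. 0) t"

abbreviation sv where "sv V E b \<alpha> \<phi> \<equiv> sat V E b \<alpha> (\<lambda>_. 0) \<phi>"

lemma ev_indep: "fnt t = {} \<Longrightarrow> evalt V E b \<alpha> \<beta> t = ev V E b \<alpha> t"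
  by (rule fn_indep) simp
lemma sv_indep: "fnf \<phi> = {} \<Longrightarrow> sat V E b \<alpha> \<beta> \<phi> = sv V E b \<alpha> \<phi>"
  by (rule fn_indep) simp

lemma upd_indep: "fnt t = {} \<Longrightarrow> evalt V E b \<alpha> (\<beta>(y := n)) t = evalt V E b \<alpha> \<beta> t"
  "fnf \<phi> = {} \<Longrightarrow> sat V E b \<alpha> (\<beta>(y := n)) \<phi> = sat V E b \<alpha> \<beta> \<phi>"
  by (rule fn_indep; simp)+

fun cterm :: "nat \<Rightarrow> nterm" where
  "cterm 0 = NZero" | "cterm (Suc n) = NPlus (cterm n) NOne"

lemma cterm_ev[simp]: "evalt V E b \<alpha> \<beta> (cterm n) = n" by (induction n) auto
lemma cterm_syn[simp]: "fvt (cterm n) = {}" "fnt (cterm n) = {}" "pst (cterm n) = {}"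
  by (induction n) auto

definition tmul :: "nat \<Rightarrow> nterm \<Rightarrow> nterm" where "tmul c t = NTimes (cterm c) t"
lemma tmul_ev[simp]: "evalt V E b \<alpha> \<beta> (tmul c t) = c * evalt V E b \<alpha> \<beta> t" by (simp add: tmul_def)
lemma tmul_syn[simp]: "fvt (tmul c t) = fvt t" "fnt (tmul c t) = fnt t" "pst (tmul c t) = pst t"
  by (simp_all add: tmul_def)

definition tite :: "form \<Rightarrow> nterm \<Rightarrow> nterm" where "tite \<phi> t = Cnt (BCons 0 t BNil) \<phi>"
lemma tite_ev: "fnf \<phi> = {} \<Longrightarrow> evalt V E b \<alpha> \<beta> (tite \<phi> t) = (if sat V E b \<alpha> \<beta> \<phi> then evalt V E b \<alpha> \<beta> t else 0)"
  by (simp add: tite_def upd_indep)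
lemma tite_syn[simp]: "fvt (tite \<phi> t) = fvt t \<union> fvf \<phi>" "fnt (tite \<phi> t) = fnt t \<union> (fnf \<phi> - {0})" "pst (tite \<phi> t) = pst t \<union> psf \<phi>"
  by (auto simp add: tite_def)

definition tsub :: "nterm \<Rightarrow> nterm \<Rightarrow> nterm" where "tsub a c = Cnt (BCons 0 a BNil) (FLe c (NVar 0))"
lemma tsub_ev: "fnt c = {} \<Longrightarrow> evalt V E b \<alpha> \<beta> (tsub a c) = evalt V E b \<alpha> \<beta> a - evalt V E b \<alpha> \<beta> c"
proof -
  assume h: "fnt c = {}"
  have "evalt V E b \<alpha> \<beta> (tsub a c) = card {n. n < evalt V E b \<alpha> \<beta> a \<and> evalt V E b \<alpha> \<beta> c \<le> n}"
    using h by (simp add: tsub_def sum.If_cases Int_def upd_indep)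
  also have "{n. n < evalt V E b \<alpha> \<beta> a \<and> evalt V E b \<alpha> \<beta> c \<le> n} = {evalt V E b \<alpha> \<beta> c..<evalt V E b \<alpha> \<beta> a}" by auto
  finally show ?thesis by simp
qed
lemma tsub_syn[simp]: "fvt (tsub a c) = fvt a \<union> fvt c" "fnt (tsub a c) = fnt a \<union> (fnt c - {0})" "pst (tsub a c) = pst a \<union> pst c"
  by (auto simp add: tsub_def)

definition tdiv :: "nterm \<Rightarrow> nterm \<Rightarrow> nterm" where
  "tdiv a d = Cnt (BCons 0 a BNil) (FLe (NTimes d (NPlus (NVar 0) NOne)) a)"
lemma tdiv_ev: "fnt a = {} \<Longrightarrow> fnt d = {} \<Longrightarrow> evalt V E b \<alpha> \<beta> (tdiv a d) =
   (if evalt V E b \<alpha> \<beta> d = 0 then evalt V E b \<alpha> \<beta> a else evalt V E b \<alpha> \<beta> a div evalt V E b \<alpha> \<beta> d)"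
proof -
  assume ha: "fnt a = {}" and hd: "fnt d = {}"
  define A where "A = evalt V E b \<alpha> \<beta> a"
  define D where "D = evalt V E b \<alpha> \<beta> d"
  have "evalt V E b \<alpha> \<beta> (tdiv a d) = card {n. n < A \<and> D * (n + 1) \<le> A}"
    using ha hd
    by (simp add: upd_indep tdiv_def sum.If_cases Int_def A_def D_def)
  also have "\<dots> = (if D = 0 then A else A div D)"
  proof (cases "D = 0")
    case True then show ?thesis by simp
  next
    case False
    have "{n. n < A \<and> D * (n + 1) \<le> A} = {..<A div D}"
    proof (intro set_eqI iffI)
      fix n assume "n \<in> {n. n < A \<and> D * (n + 1) \<le> A}"
      then have "(n+1) * D \<le> A" by (simp add: mult.commute)
      then have "n + 1 \<le> A div D" using False by (simp add: less_eq_div_iff_mult_less_eq)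
      then show "n \<in> {..<A div D}" by simp
    next
      fix n assume "n \<in> {..<A div D}"
      then have "n + 1 \<le> A div D" by simp
      then have "(n+1) * D \<le> A" using False by (simp add: less_eq_div_iff_mult_less_eq)
      moreover then have "n < A" using False
        by (metis add_lessD1 le_trans less_add_one mult_le_mono2 nat_mult_1_right not_less not_less_zero less_one mult.commute)
      ultimately show "n \<in> {n. n < A \<and> D * (n + 1) \<le> A}" by (simp add: mult.commute)
    qed
    then show ?thesis using False by simp
  qed
  finally show ?thesis by (simp add: A_def D_def)
qed
lemma tdiv_syn[simp]: "fvt (tdiv a d) = fvt a \<union> fvt d" "fnt (tdiv a d) = fnt a \<union> ((fnt d \<union> fnt a) - {0})" "pst (tdiv a d) = pst a \<union> pst d"
  by (auto simp add: tdiv_def)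

definition nbr :: "nat set \<Rightarrow> (nat \<Rightarrow> nat \<Rightarrow> bool) \<Rightarrow> (vvar \<Rightarrow> nat) \<Rightarrow> nat set" where
  "nbr V E \<alpha> = {c\<in>V. E (\<alpha> X1) c}"

definition nsum :: "nterm \<Rightarrow> nterm" where "nsum t = CntG X1 True (BCons 0 t BNil) (FLe NZero NZero)"
lemma nsum_ev: "finite V \<Longrightarrow> evalt V E b \<alpha> \<beta> (nsum t) = (\<Sum>c\<in>nbr V E \<alpha>. evalt V E b (\<alpha>(X2 := c)) \<beta> t)"
  by (simp add: nsum_def nbr_def sum.If_cases Int_def Let_def)
lemma nsum_syn[simp]: "fvt (nsum t) = insert X1 (fvt t - {X2})" "fnt (nsum t) = fnt t" "pst (nsum t) = pst t"
  by (auto simp add: nsum_def)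

definition ndeg :: nterm where "ndeg = CntG X1 True BNil (FLe NZero NZero)"
lemma ndeg_ev: "finite V \<Longrightarrow> evalt V E b \<alpha> \<beta> ndeg = card (nbr V E \<alpha>)"
  by (simp add: ndeg_def nbr_def sum.If_cases Int_def Let_def)
lemma ndeg_syn[simp]: "fvt ndeg = {X1}" "fnt ndeg = {}" "pst ndeg = {}"
  by (auto simp add: ndeg_def)

definition nmax :: "nterm \<Rightarrow> nterm" where
  "nmax t = Cnt (BCons 0 (nsum t) BNil) (FLe NOne (CntG X1 True BNil (FLe (NPlus (NVar 0) NOne) t)))"
lemma nmax_syn[simp]: "fvt (nmax t) = insert X1 (fvt t - {X2})" "fnt t = {} \<Longrightarrow> fnt (nmax t) = {}" "pst (nmax t) = pst t"
  by (auto simp add: nmax_def nsum_def)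

lemma nmax_ev: assumes "finite V" "fnt t = {}"
  shows "evalt V E b \<alpha> \<beta> (nmax t) = (if nbr V E \<alpha> = {} then 0 else Max ((\<lambda>c. evalt V E b (\<alpha>(X2 := c)) \<beta> t) ` nbr V E \<alpha>))"
proof -
  let ?N = "nbr V E \<alpha>"
  let ?f = "\<lambda>c. evalt V E b (\<alpha>(X2 := c)) \<beta> t"
  have fin: "finite ?N" using assms(1) by (simp add: nbr_def)
  have S: "evalt V E b \<alpha> \<beta> (nsum t) = (\<Sum>c\<in>?N. ?f c)"
    using nsum_ev[OF assms(1)] by simp
  have inner: "sat V E b \<alpha> (\<beta>(0 := n)) (FLe NOne (CntG X1 True BNil (FLe (NPlus (NVar 0) NOne) t)))
      \<longleftrightarrow> (\<exists>c\<in>?N. n < ?f c)" for n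
  proof -
    have pt: "cntb V E b (\<alpha>(X2 := c)) (\<beta>(0 := n)) BNil (FLe (NPlus (NVar 0) NOne) t) = (if n < ?f c then 1 else 0)" for c
      using assms(2) by (simp add: upd_indep)
    have "evalt V E b \<alpha> (\<beta>(0 := n)) (CntG X1 True BNil (FLe (NPlus (NVar 0) NOne) t))
       = (\<Sum>c\<in>V. if E (\<alpha> X1) c then (if n < ?f c then 1 else 0) else 0)"
      by (simp only: evalt.simps Let_def other.simps pt) simp
    also have "\<dots> = (\<Sum>c\<in>V. if E (\<alpha> X1) c \<and> n < ?f c then 1 else 0)" by (rule sum.cong) auto
    also have "\<dots> = card {c\<in>?N. n < ?f c}"
      using assms(1) by (simp add: nbr_def sum.If_cases Int_def conj_commute)
    finally have "evalt V E b \<alpha> (\<beta>(0 := n)) (CntG X1 True BNil (FLe (NPlus (NVar 0) NOne) t))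
       = card {c\<in>?N. n < ?f c}" .
    moreover have "1 \<le> card {c\<in>?N. n < ?f c} \<longleftrightarrow> (\<exists>c\<in>?N. n < ?f c)"
      using fin by (auto simp: Suc_le_eq card_gt_0_iff)
    ultimately show ?thesis by simp
  qed
  have "evalt V E b \<alpha> \<beta> (nmax t) = card {n. n < (\<Sum>c\<in>?N. ?f c) \<and> (\<exists>c\<in>?N. n < ?f c)}"
    unfolding nmax_def using S inner by (simp add: sum.If_cases Int_def)
  also have "\<dots> = (if ?N = {} then 0 else Max (?f ` ?N))"
  proof (cases "?N = {}")
    case True then show ?thesis by simp
  next
    case False
    have "{n. n < (\<Sum>c\<in>?N. ?f c) \<and> (\<exists>c\<in>?N. n < ?f c)} = {..<Max (?f ` ?N)}"
    proof (intro set_eqI iffI)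
      fix n assume "n \<in> {n. n < (\<Sum>c\<in>?N. ?f c) \<and> (\<exists>c\<in>?N. n < ?f c)}"
      then obtain c where "c \<in> ?N" "n < ?f c" by auto
      moreover have "?f c \<le> Max (?f ` ?N)" using fin \<open>c \<in> ?N\<close> by (simp add: Max_ge)
      ultimately show "n \<in> {..<Max (?f ` ?N)}" by simp
    next
      fix n assume n: "n \<in> {..<Max (?f ` ?N)}"
      obtain c where c: "c \<in> ?N" "?f c = Max (?f ` ?N)"
      proof -
        have "Max (?f ` ?N) \<in> ?f ` ?N" using fin False by (intro Max_in) auto
        then show ?thesis using that by (auto simp del: Max_in)
      qed
      have "?f c \<le> (\<Sum>c\<in>?N. ?f c)" using fin c(1) by (intro member_le_sum) auto
      then show "n \<in> {n. n < (\<Sum>c\<in>?N. ?f c) \<and> (\<exists>c\<in>?N. n < ?f c)}" using n c by (auto intro!: bexI[of _ c])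
    qed
    then show ?thesis using False by simp
  qed
  finally show ?thesis .
qed

fun npow :: "nterm \<Rightarrow> nat \<Rightarrow> nterm" where
  "npow t 0 = NOne" | "npow t (Suc k) = NTimes t (npow t k)"
lemma npow_ev[simp]: "evalt V E b \<alpha> \<beta> (npow t k) = evalt V E b \<alpha> \<beta> t ^ k" by (induction k) auto
lemma npow_syn[simp]: "fvt (npow NOrd k) = {}" "fnt (npow NOrd k) = {}" "pst (npow NOrd k) = {}"
  by (induction k) auto


type_synonym trip = "nterm \<times> nterm \<times> nat"

definition okT :: "nat \<Rightarrow> vvar set \<Rightarrow> trip \<Rightarrow> bool" where
  "okT p S T = (case T of (P, N, e) \<Rightarrow> okt p S P \<and> okt p S N)"

lemma okt_simps[simp]:
  "okt p S (NPlus s t) \<longleftrightarrow> okt p S s \<and> okt p S t"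
  "okt p S (NTimes s t) \<longleftrightarrow> okt p S s \<and> okt p S t"
  "okt p S (tmul c t) \<longleftrightarrow> okt p S t"
  "okt p S NZero" "okt p S NOne" "okt p S (cterm n)"
  "okt p S (npow NOrd k)"
  by (auto simp: okt_def)
lemma okf_simps[simp]:
  "okf p S (FLe s t) \<longleftrightarrow> okt p S s \<and> okt p S t"
  "okf p S (FAnd \<phi> \<psi>) \<longleftrightarrow> okf p S \<phi> \<and> okf p S \<psi>"
  by (auto simp: okt_def okf_def)
lemma okt_tite[simp]: "okt p S t \<Longrightarrow> okf p S \<phi> \<Longrightarrow> okt p S (tite \<phi> t)"
  by (auto simp: okt_def okf_def)
lemma okt_fnt: "okt p S t \<Longrightarrow> fnt t = {}" by (simp add: okt_def)
lemma okf_fnf: "okf p S \<phi> \<Longrightarrow> fnf \<phi> = {}" by (simp add: okf_def)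

definition dsplit :: "real \<Rightarrow> int \<times> nat" where
  "dsplit x = (SOME ak. x = of_int (fst ak) / 2 ^ snd ak)"
lemma dsplit: "dyadic x \<Longrightarrow> x = of_int (fst (dsplit x)) / 2 ^ snd (dsplit x)"
  unfolding dsplit_def dyadic_def by (rule someI_ex) auto

locale scl = fixes A Ln :: nat
begin

definition Rv :: "nat set \<Rightarrow> real" where "Rv V = 2 ^ A * real (card V) ^ Ln"
definition rterm :: nterm where "rterm = NTimes (cterm (2 ^ A)) (npow NOrd Ln)"
lemma rterm_ev[simp]: "real (evalt V E b \<alpha> \<beta> rterm) = Rv V"
  by (simp add: rterm_def Rv_def)
lemma rterm_ok[simp]: "okt p S rterm" by (simp add: rterm_def)
lemma Rv_pos: "card V > 0 \<Longrightarrow> Rv V > 0" by (simp add: Rv_def)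

definition tv :: "nat set \<Rightarrow> (nat \<Rightarrow> nat \<Rightarrow> bool) \<Rightarrow> (nat \<Rightarrow> nat \<Rightarrow> bool) \<Rightarrow> (vvar \<Rightarrow> nat) \<Rightarrow> trip \<Rightarrow> real" where
  "tv V E b \<alpha> T = (case T of (P, N, e) \<Rightarrow> (real (ev V E b \<alpha> P) - real (ev V E b \<alpha> N)) / (2 ^ e * Rv V))"

definition tadd :: "trip \<Rightarrow> trip \<Rightarrow> trip" where
  "tadd T1 T2 = (case T1 of (P1, N1, e1) \<Rightarrow> case T2 of (P2, N2, e2) \<Rightarrow>
     (NPlus (tmul (2 ^ (max e1 e2 - e1)) P1) (tmul (2 ^ (max e1 e2 - e2)) P2),
      NPlus (tmul (2 ^ (max e1 e2 - e1)) N1) (tmul (2 ^ (max e1 e2 - e2)) N2), max e1 e2))"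

lemma pow2_split: "e1 \<le> m \<Longrightarrow> (2::real) ^ m = 2 ^ (m - e1) * 2 ^ e1"
  by (simp add: power_add[symmetric])

lemma tadd_tv[simp]: "tv V E b \<alpha> (tadd T1 T2) = tv V E b \<alpha> T1 + tv V E b \<alpha> T2"
proof -
  obtain P1 N1 e1 P2 N2 e2 where T: "T1 = (P1, N1, e1)" "T2 = (P2, N2, e2)" by (cases T1, cases T2) auto
  let ?m = "max e1 e2"
  have s1: "(2::real) ^ ?m = 2 ^ (?m - e1) * 2 ^ e1" by (rule pow2_split) simp
  have s2: "(2::real) ^ ?m = 2 ^ (?m - e2) * 2 ^ e2" by (rule pow2_split) simp
  define a where "a = real (ev V E b \<alpha> P1) - real (ev V E b \<alpha> N1)"
  define c where "c = real (ev V E b \<alpha> P2) - real (ev V E b \<alpha> N2)"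
  have "tv V E b \<alpha> (tadd T1 T2) = (2 ^ (?m - e1) * a + 2 ^ (?m - e2) * c) / (2 ^ ?m * Rv V)"
    by (simp add: tv_def tadd_def T a_def c_def algebra_simps)
  also have "\<dots> = 2 ^ (?m - e1) * a / (2 ^ ?m * Rv V) + 2 ^ (?m - e2) * c / (2 ^ ?m * Rv V)"
    by (simp add: add_divide_distrib)
  also have "2 ^ (?m - e1) * a / (2 ^ ?m * Rv V) = a / (2 ^ e1 * Rv V)"
    unfolding s1 by simp
  also have "2 ^ (?m - e2) * c / (2 ^ ?m * Rv V) = c / (2 ^ e2 * Rv V)"
    unfolding s2 by simp
  finally show ?thesis by (simp add: tv_def T a_def c_def)
qed
lemma tadd_ok[simp]: "okT p S T1 \<Longrightarrow> okT p S T2 \<Longrightarrow> okT p S (tadd T1 T2)"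
  by (auto simp: okT_def tadd_def split: prod.splits)

definition tsc :: "int \<Rightarrow> nat \<Rightarrow> trip \<Rightarrow> trip" where
  "tsc a k T = (case T of (P, N, e) \<Rightarrow> if 0 \<le> a then (tmul (nat a) P, tmul (nat a) N, e + k)
     else (tmul (nat (- a)) N, tmul (nat (- a)) P, e + k))"
lemma tsc_tv[simp]: "tv V E b \<alpha> (tsc a k T) = of_int a / 2 ^ k * tv V E b \<alpha> T"
proof -
  obtain P N e where T: "T = (P, N, e)" by (cases T) auto
  show ?thesis
  proof (cases "0 \<le> a")
    case True
    then have "real (nat a) = of_int a" by simp
    then show ?thesis using True by (simp add: tv_def tsc_def T power_add field_simps)
  next
    case False
    then have "real (nat (-a)) = - of_int a" by simp
    then show ?thesis using False by (simp add: tv_def tsc_def T power_add field_simps)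
  qed
qed
lemma tsc_ok[simp]: "okT p S T \<Longrightarrow> okT p S (tsc a k T)"
  by (auto simp: okT_def tsc_def split: prod.splits)

definition tcst :: "int \<Rightarrow> nat \<Rightarrow> trip" where
  "tcst a k = (if 0 \<le> a then (tmul (nat a) rterm, NZero, k) else (NZero, tmul (nat (- a)) rterm, k))"
lemma tcst_tv[simp]: "card V > 0 \<Longrightarrow> tv V E b \<alpha> (tcst a k) = of_int a / 2 ^ k"
  using Rv_pos[of V] by (auto simp: tv_def tcst_def field_simps)
lemma tcst_ok[simp]: "okT p S (tcst a k)"
  by (auto simp: okT_def tcst_def)

definition tscr :: "real \<Rightarrow> trip \<Rightarrow> trip" where "tscr x T = tsc (fst (dsplit x)) (snd (dsplit x)) T"
definition tcr :: "real \<Rightarrow> trip" where "tcr x = tcst (fst (dsplit x)) (snd (dsplit x))"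
lemma tscr_tv[simp]: "dyadic x \<Longrightarrow> tv V E b \<alpha> (tscr x T) = x * tv V E b \<alpha> T"
  unfolding tscr_def using dsplit[of x] by simp
lemma tcr_tv[simp]: "dyadic x \<Longrightarrow> card V > 0 \<Longrightarrow> tv V E b \<alpha> (tcr x) = x"
  unfolding tcr_def using dsplit[of x] by simp
lemma tscr_ok[simp]: "okT p S T \<Longrightarrow> okT p S (tscr x T)" by (simp add: tscr_def)
lemma tcr_ok[simp]: "okT p S (tcr x)" by (simp add: tcr_def)

definition ttite :: "form \<Rightarrow> trip \<Rightarrow> trip" where
  "ttite \<phi> T = (case T of (P, N, e) \<Rightarrow> (tite \<phi> P, tite \<phi> N, e))"
lemma ttite_tv[simp]: "fnf \<phi> = {} \<Longrightarrow> tv V E b \<alpha> (ttite \<phi> T) = (if sv V E b \<alpha> \<phi> then tv V E b \<alpha> T else 0)"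
  by (auto simp: tv_def ttite_def tite_ev split: prod.splits)
lemma ttite_ok[simp]: "okT p S T \<Longrightarrow> okf p S \<phi> \<Longrightarrow> okT p S (ttite \<phi> T)"
  by (auto simp: okT_def ttite_def split: prod.splits)

definition tle :: "trip \<Rightarrow> trip \<Rightarrow> form" where
  "tle T1 T2 = (case T1 of (P1, N1, e1) \<Rightarrow> case T2 of (P2, N2, e2) \<Rightarrow>
     FLe (NPlus (tmul (2 ^ (max e1 e2 - e1)) P1) (tmul (2 ^ (max e1 e2 - e2)) N2))
         (NPlus (tmul (2 ^ (max e1 e2 - e2)) P2) (tmul (2 ^ (max e1 e2 - e1)) N1)))"
lemma tle_ok[simp]: "okT p S T1 \<Longrightarrow> okT p S T2 \<Longrightarrow> okf p S (tle T1 T2)"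
  by (auto simp: okT_def tle_def split: prod.splits)

lemma tle_sv: assumes "card V > 0"
  shows "sat V E b \<alpha> (\<lambda>_. 0) (tle T1 T2) \<longleftrightarrow> tv V E b \<alpha> T1 \<le> tv V E b \<alpha> T2"
proof -
  obtain P1 N1 e1 P2 N2 e2 where T: "T1 = (P1, N1, e1)" "T2 = (P2, N2, e2)" by (cases T1, cases T2) auto
  let ?m = "max e1 e2"
  have R: "Rv V > 0" using Rv_pos assms by blast
  have s1: "(2::real) ^ ?m = 2 ^ (?m - e1) * 2 ^ e1" by (rule pow2_split) simp
  have s2: "(2::real) ^ ?m = 2 ^ (?m - e2) * 2 ^ e2" by (rule pow2_split) simp
  define a1 where "a1 = real (evalt V E b \<alpha> (\<lambda>_. 0) P1)"
  define b1 where "b1 = real (evalt V E b \<alpha> (\<lambda>_. 0) N1)"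
  define a2 where "a2 = real (evalt V E b \<alpha> (\<lambda>_. 0) P2)"
  define b2 where "b2 = real (evalt V E b \<alpha> (\<lambda>_. 0) N2)"
  define x1 where "x1 = evalt V E b \<alpha> (\<lambda>_. 0) P1"
  define y1 where "y1 = evalt V E b \<alpha> (\<lambda>_. 0) N1"
  define x2 where "x2 = evalt V E b \<alpha> (\<lambda>_. 0) P2"
  define y2 where "y2 = evalt V E b \<alpha> (\<lambda>_. 0) N2"
  have "sat V E b \<alpha> (\<lambda>_. 0) (tle T1 T2) \<longleftrightarrow> 2 ^ (?m - e1) * x1 + 2 ^ (?m - e2) * y2 \<le> 2 ^ (?m - e2) * x2 + 2 ^ (?m - e1) * y1"
    unfolding tle_def T x1_def y1_def x2_def y2_def by simp
  also have "\<dots> \<longleftrightarrow> real (2 ^ (?m - e1) * x1 + 2 ^ (?m - e2) * y2) \<le> real (2 ^ (?m - e2) * x2 + 2 ^ (?m - e1) * y1)"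
    by (rule of_nat_le_iff[symmetric])
  also have "\<dots> \<longleftrightarrow> 2 ^ (?m - e1) * a1 + 2 ^ (?m - e2) * b2 \<le> 2 ^ (?m - e2) * a2 + 2 ^ (?m - e1) * b1"
    unfolding a1_def b1_def a2_def b2_def x1_def y1_def x2_def y2_def by simp
  also have "\<dots> \<longleftrightarrow> (2 ^ (?m - e1) * (a1 - b1)) / (2 ^ ?m * Rv V) \<le> (2 ^ (?m - e2) * (a2 - b2)) / (2 ^ ?m * Rv V)"
  proof -
    have D: "0 < Rv V * 2 ^ ?m" using R by simp
    show ?thesis using D by (auto simp: divide_le_cancel algebra_simps)
  qed
  also have "(2 ^ (?m - e1) * (a1 - b1)) / (2 ^ ?m * Rv V) = (a1 - b1) / (2 ^ e1 * Rv V)"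
    unfolding s1 by simp
  also have "(2 ^ (?m - e2) * (a2 - b2)) / (2 ^ ?m * Rv V) = (a2 - b2) / (2 ^ e2 * Rv V)"
    unfolding s2 by simp
  finally show ?thesis
    by (simp add: tv_def T a1_def b1_def a2_def b2_def)
qed

end


context scl begin

definition tzero :: trip where "tzero = (NZero, NZero, 0)"
lemma tzero_tv[simp]: "tv V E b \<alpha> tzero = 0" by (simp add: tzero_def tv_def)
lemma tzero_ok[simp]: "okT p S tzero" by (simp add: tzero_def okT_def)

definition tsumL :: "trip list \<Rightarrow> trip" where "tsumL Ts = foldr tadd Ts tzero"
lemma tsumL_tv[simp]: "tv V E b \<alpha> (tsumL Ts) = sum_list (map (tv V E b \<alpha>) Ts)"
  by (induction Ts) (auto simp: tsumL_def)
lemma tsumL_ok[simp]: "(\<forall>T\<in>set Ts. okT p S T) \<Longrightarrow> okT p S (tsumL Ts)"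
  by (induction Ts) (auto simp: tsumL_def)

definition cntt :: "real list \<Rightarrow> trip \<Rightarrow> nterm" where
  "cntt ts T = foldr (\<lambda>t acc. NPlus (tite (tle (tcr t) T) NOne) acc) ts NZero"
lemma cntt_ok[simp]: "okT p S T \<Longrightarrow> okt p S (cntt ts T)"
  by (induction ts) (auto simp: cntt_def)
lemma cntt_ev: assumes "okT p S T" "card V > 0" "\<forall>t\<in>set ts. dyadic t"
  shows "evalt V E b \<alpha> (\<lambda>_. 0) (cntt ts T) = length (filter (\<lambda>t. t \<le> tv V E b \<alpha> T) ts)"
  using assms(3)
proof (induction ts)
  case Nil then show ?case by (simp add: cntt_def)
next
  case (Cons t ts)
  have f: "fnf (tle (tcr t) T) = {}" using assms(1) by (intro okf_fnf[of p S]) simp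
  have "sv V E b \<alpha> (tle (tcr t) T) \<longleftrightarrow> t \<le> tv V E b \<alpha> T"
    using tle_sv[OF assms(2)] Cons.prems assms(2) by simp
  then show ?case using Cons f by (simp add: cntt_def tite_ev)
qed

definition sact :: "real list \<Rightarrow> real list \<Rightarrow> real list \<Rightarrow> trip \<Rightarrow> trip" where
  "sact ts sl cs T = tsumL (map (\<lambda>j. ttite (FAnd (FLe (cntt ts T) (cterm j)) (FLe (cterm j) (cntt ts T)))
       (tadd (tscr (sl ! j) T) (tcr (cs ! j)))) [0..<Suc (length ts)])"

lemma sact_ok[simp]: "okT p S T \<Longrightarrow> okT p S (sact ts sl cs T)"
  by (auto simp: sact_def)

lemma sact_tv: assumes "okT p S T" "card V > 0" "\<forall>t\<in>set ts. dyadic t" "\<forall>a\<in>set sl. dyadic a" "\<forall>c\<in>set cs. dyadic c"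
   "length sl = Suc (length ts)" "length cs = Suc (length ts)"
  shows "tv V E b \<alpha> (sact ts sl cs T) = sl ! piece_index ts (tv V E b \<alpha> T) * tv V E b \<alpha> T + cs ! piece_index ts (tv V E b \<alpha> T)"
proof -
  let ?x = "tv V E b \<alpha> T"
  let ?k = "piece_index ts ?x"
  have ce: "evalt V E b \<alpha> (\<lambda>_. 0) (cntt ts T) = ?k"
    using cntt_ev[OF assms(1-3)] by (simp add: piece_index_def)
  have fn: "fnf (FAnd (FLe (cntt ts T) (cterm j)) (FLe (cterm j) (cntt ts T))) = {}" for j
    using assms(1) by (intro okf_fnf[of p S]) simp
  have k: "?k < Suc (length ts)" by (simp add: piece_index_def le_imp_less_Suc)
  have trm: "tv V E b \<alpha> (ttite (FAnd (FLe (cntt ts T) (cterm j)) (FLe (cterm j) (cntt ts T)))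
       (tadd (tscr (sl ! j) T) (tcr (cs ! j)))) = (if j = ?k then sl ! j * ?x + cs ! j else 0)"
    if "j < Suc (length ts)" for j
  proof -
    have "dyadic (sl ! j)" "dyadic (cs ! j)" using that assms(4-7) by auto
    then show ?thesis using fn[of j] ce assms(2) by (auto simp: ttite_tv)
  qed
  have "tv V E b \<alpha> (sact ts sl cs T) = (\<Sum>j\<leftarrow>[0..<Suc (length ts)]. (if j = ?k then sl ! j * ?x + cs ! j else 0))"
    unfolding sact_def tsumL_tv map_map comp_def
    by (rule arg_cong[where f=sum_list], rule map_cong[OF refl], rule trm) auto
  also have "\<dots> = (\<Sum>j\<in>set [0..<Suc (length ts)]. (if j = ?k then sl ! j * ?x + cs ! j else 0))"
    by (rule sum_set_upt_conv_sum_list_nat[symmetric])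
  also have "\<dots> = sl ! ?k * ?x + cs ! ?k" using k by simp
  finally show ?thesis .
qed

definition pw :: "(real \<Rightarrow> real) \<Rightarrow> real list \<times> real list \<times> real list" where
  "pw L = (SOME (ts, sl, cs). sorted_wrt (<) ts \<and> length sl = Suc (length ts)
     \<and> length cs = Suc (length ts)
     \<and> (\<forall>t\<in>set ts. dyadic t) \<and> (\<forall>a\<in>set sl. dyadic a) \<and> (\<forall>c\<in>set cs. dyadic c)
     \<and> (\<forall>x. L x = sl ! piece_index ts x * x + cs ! piece_index ts x))"

definition sactF :: "(real \<Rightarrow> real) \<Rightarrow> trip \<Rightarrow> trip" where
  "sactF L T = sact (fst (pw L)) (fst (snd (pw L))) (snd (snd (pw L))) T"

lemma sactF_ok[simp]: "okT p S T \<Longrightarrow> okT p S (sactF L T)"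
  by (simp add: sactF_def)

lemma sactF_tv: assumes "rat_pwl L" "okT p S T" "card V > 0"
  shows "tv V E b \<alpha> (sactF L T) = L (tv V E b \<alpha> T)"
proof -
  obtain ts sl cs where pweq: "pw L = (ts, sl, cs)" by (cases "pw L") auto
  have "sorted_wrt (<) ts \<and> length sl = Suc (length ts)
     \<and> length cs = Suc (length ts)
     \<and> (\<forall>t\<in>set ts. dyadic t) \<and> (\<forall>a\<in>set sl. dyadic a) \<and> (\<forall>c\<in>set cs. dyadic c)
     \<and> (\<forall>x. L x = sl ! piece_index ts x * x + cs ! piece_index ts x)"
  proof -
    have "\<exists>y. (case y of (ts, sl, cs) \<Rightarrow> sorted_wrt (<) ts \<and> length sl = Suc (length ts)
     \<and> length cs = Suc (length ts)
     \<and> (\<forall>t\<in>set ts. dyadic t) \<and> (\<forall>a\<in>set sl. dyadic a) \<and> (\<forall>c\<in>set cs. dyadic c)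
     \<and> (\<forall>x. L x = sl ! piece_index ts x * x + cs ! piece_index ts x))"
      using assms(1) unfolding rat_pwl_def by auto
    from someI_ex[OF this] show ?thesis using pweq unfolding pw_def by simp
  qed
  then show ?thesis using sact_tv[OF assms(2,3), of ts sl cs] pweq by (simp add: sactF_def)
qed

end


lemma fnn_vals_len[simp]: "length (fnn_vals F x k) = k"
  by (induction k) (auto simp: Let_def)

lemma fnn_vals_nth: "u < k \<Longrightarrow> k \<le> m \<Longrightarrow> fnn_vals F x m ! u = fnn_vals F x k ! u"
proof (induction m)
  case 0 then show ?case by simp
next
  case (Suc m)
  show ?case
  proof (cases "k \<le> m")
    case True
    then have "fnn_vals F x (Suc m) ! u = fnn_vals F x m ! u" using Suc.prems by (simp add: Let_def nth_append)
    then show ?thesis using Suc True by simp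
  next
    case False then have "k = Suc m" using Suc.prems by simp
    then show ?thesis by simp
  qed
qed

lemma the_idx: assumes "distinct xs" "k \<in> set xs"
  shows "(THE j. j < length xs \<and> xs ! j = k) < length xs \<and> xs ! (THE j. j < length xs \<and> xs ! j = k) = k"
  using theI'[OF distinct_Ex1[OF assms]] .

context scl begin

fun svals :: "fnn \<Rightarrow> trip list \<Rightarrow> nat \<Rightarrow> trip list" where
  "svals F xs 0 = []"
| "svals F xs (Suc k) = (let vs = svals F xs k in vs @ [if k \<in> set (fins F) then xs ! (THE j. j < length (fins F) \<and> fins F ! j = k)
     else sactF (fact F k) (tadd (tcr (fbias F k)) (tsumL (map (\<lambda>u. tscr (fwt F u k) (vs ! u)) (filter (\<lambda>u. (u, k) \<in> fedges F) [0..<k]))))])"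

definition seval :: "fnn \<Rightarrow> trip list \<Rightarrow> trip list" where
  "seval F xs = map (\<lambda>v. svals F xs (fnodes F) ! v) (fouts F)"

lemma svals_len[simp]: "length (svals F xs k) = k"
  by (induction k) (auto simp: Let_def)

lemma svals_correct:
  assumes wf: "fnn_wf F" and rp: "fnn_rpwl F" and lxs: "length xs = length (fins F)" and lx: "length x = length (fins F)"
    and xv: "\<forall>j<length xs. tv V E b \<alpha> (xs ! j) = x ! j \<and> okT p S (xs ! j)" and cV: "card V > 0"
  shows "k \<le> fnodes F \<Longrightarrow> \<forall>u<k. tv V E b \<alpha> (svals F xs k ! u) = fnn_vals F x k ! u \<and> okT p S (svals F xs k ! u)"
proof (induction k)
  case 0 then show ?case by simp
next
  case (Suc k)
  then have IH: "\<forall>u<k. tv V E b \<alpha> (svals F xs k ! u) = fnn_vals F x k ! u \<and> okT p S (svals F xs k ! u)" by simp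
  have kn: "k < fnodes F" using Suc.prems by simp
  have new: "tv V E b \<alpha> (svals F xs (Suc k) ! k) = fnn_vals F x (Suc k) ! k \<and> okT p S (svals F xs (Suc k) ! k)"
  proof (cases "k \<in> set (fins F)")
    case True
    let ?j = "THE j. j < length (fins F) \<and> fins F ! j = k"
    have "?j < length (fins F)" using the_idx[of "fins F" k] wf True by (simp add: fnn_wf_def)
    then show ?thesis using True xv lxs by (simp add: Let_def nth_append)
  next
    case False
    let ?vs = "svals F xs k"
    let ?us = "filter (\<lambda>u. (u, k) \<in> fedges F) [0..<k]"
    let ?arg = "tadd (tcr (fbias F k)) (tsumL (map (\<lambda>u. tscr (fwt F u k) (?vs ! u)) ?us))"
    have rk: "dyadic (fbias F k)" "rat_pwl (fact F k)" using rp kn False by (auto simp: fnn_rpwl_def)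
    have okarg: "okT p S ?arg" using IH by auto
    have dw: "dyadic (fwt F u k)" if "u \<in> set ?us" for u using rp that by (auto simp: fnn_rpwl_def)
    have me: "map (\<lambda>u. tv V E b \<alpha> (tscr (fwt F u k) (?vs ! u))) ?us = map (\<lambda>u. fwt F u k * fnn_vals F x k ! u) ?us"
    proof (rule map_cong[OF refl])
      fix u assume u: "u \<in> set ?us"
      then have "u < k" by simp
      then show "tv V E b \<alpha> (tscr (fwt F u k) (?vs ! u)) = fwt F u k * fnn_vals F x k ! u"
        using dw[OF u] IH by simp
    qed
    have "tv V E b \<alpha> ?arg = fbias F k + sum_list (map (\<lambda>u. tv V E b \<alpha> (tscr (fwt F u k) (?vs ! u))) ?us)"
      using rk(1) cV by (simp add: comp_def del: tscr_tv)
    also have "\<dots> = fbias F k + (\<Sum>u\<leftarrow>?us. fwt F u k * fnn_vals F x k ! u)"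
      by (simp only: me)
    also have "\<dots> = fbias F k + (\<Sum>u\<in>{u. u < k \<and> (u, k) \<in> fedges F}. fwt F u k * fnn_vals F x k ! u)"
      by (subst sum_list_distinct_conv_sum_set) (auto intro!: sum.cong)
    finally have "tv V E b \<alpha> ?arg = fbias F k + (\<Sum>u\<in>{u. u < k \<and> (u, k) \<in> fedges F}. fwt F u k * fnn_vals F x k ! u)" .
    then show ?thesis using False sactF_tv[OF rk(2) okarg cV] okarg by (simp add: Let_def nth_append)
  qed
  show ?case
  proof (intro allI impI)
    fix u assume "u < Suc k"
    then show "tv V E b \<alpha> (svals F xs (Suc k) ! u) = fnn_vals F x (Suc k) ! u \<and> okT p S (svals F xs (Suc k) ! u)"
    proof (cases "u < k")
      case True then show ?thesis using IH by (simp add: Let_def nth_append)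
    next
      case False then have "u = k" using \<open>u < Suc k\<close> by simp
      then show ?thesis using new by simp
    qed
  qed
qed

lemma seval_correct:
  assumes wf: "fnn_wf F" and rp: "fnn_rpwl F" and lxs: "length xs = length (fins F)" and lx: "length x = length (fins F)"
    and xv: "\<forall>j<length xs. tv V E b \<alpha> (xs ! j) = x ! j \<and> okT p S (xs ! j)" and cV: "card V > 0"
  shows "length (seval F xs) = length (fouts F)" "\<forall>i<length (fouts F). tv V E b \<alpha> (seval F xs ! i) = fnn_eval F x ! i \<and> okT p S (seval F xs ! i)"
proof -
  show "length (seval F xs) = length (fouts F)" by (simp add: seval_def)
  have "fouts F ! i < fnodes F" if "i < length (fouts F)" for i
    using wf that nth_mem[OF that] by (auto simp: fnn_wf_def)
  then show "\<forall>i<length (fouts F). tv V E b \<alpha> (seval F xs ! i) = fnn_eval F x ! i \<and> okT p S (seval F xs ! i)"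
    using svals_correct[OF assms, of "fnodes F"] by (simp add: seval_def fnn_eval_def)
qed

end


lemma left_limit_eq:
  fixes L g :: "real \<Rightarrow> real"
  assumes "continuous_on UNIV L" "x < t" "\<And>s. x < s \<Longrightarrow> s < t \<Longrightarrow> L s = g s" "continuous_on UNIV g"
  shows "L t = g t"
proof -
  have c1: "(L \<longlongrightarrow> L t) (at_left t)"
  proof -
    have "isCont L t" using assms(1) by (simp add: continuous_on_eq_continuous_at)
    then have "(L \<longlongrightarrow> L t) (at t)" by (simp add: isCont_def)
    then show ?thesis by (rule tendsto_within_subset) simp
  qed
  have c2: "(g \<longlongrightarrow> g t) (at_left t)"
  proof -
    have "isCont g t" using assms(4) by (simp add: continuous_on_eq_continuous_at)
    then have "(g \<longlongrightarrow> g t) (at t)" by (simp add: isCont_def)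
    then show ?thesis by (rule tendsto_within_subset) simp
  qed
  have ev: "eventually (\<lambda>s. L s = g s) (at_left t)"
    using eventually_at_left_real[OF assms(2)] by (rule eventually_mono) (use assms(3) in simp)
  have c3: "(L \<longlongrightarrow> g t) (at_left t)" using c2 tendsto_cong[OF ev] by simp
  show ?thesis by (rule tendsto_unique[OF _ c1 c3]) simp
qed

lemma pwl_lipschitz:
  assumes "rat_pwl L" "continuous_on UNIV L"
  shows "\<exists>M\<ge>0. \<forall>x y. \<bar>L x - L y\<bar> \<le> M * \<bar>x - y\<bar>"
proof -
  obtain ts sl cs where ts: "length sl = Suc (length ts)"
    and Lx: "\<And>x. L x = sl ! piece_index ts x * x + cs ! piece_index ts x"
    using assms(1) unfolding rat_pwl_def by blast
  define M where "M = (\<Sum>a\<in>set sl. \<bar>a\<bar>)"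
  have M0: "M \<ge> 0" unfolding M_def by (rule sum_nonneg) simp
  have slM: "\<bar>sl ! piece_index ts x\<bar> \<le> M" for x
  proof -
    have "piece_index ts x < length sl" using ts by (simp add: piece_index_def le_imp_less_Suc)
    then have "sl ! piece_index ts x \<in> set sl" by simp
    then show ?thesis unfolding M_def by (intro member_le_sum[where f=abs]) auto
  qed
  let ?T = "set ts"
  have main: "\<forall>x y. x \<le> y \<longrightarrow> card {t\<in>?T. x < t \<and> t \<le> y} = n \<longrightarrow> \<bar>L y - L x\<bar> \<le> M * (y - x)" for n
  proof (induction n rule: less_induct)
    case (less n)
    show ?case
    proof (intro allI impI)
      fix x y :: real assume xy: "x \<le> y" and cn: "card {t\<in>?T. x < t \<and> t \<le> y} = n"
      let ?S = "{t\<in>?T. x < t \<and> t \<le> y}"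
      have finS: "finite ?S" by simp
      show "\<bar>L y - L x\<bar> \<le> M * (y - x)"
      proof (cases "?S = {}")
        case True
        have "filter (\<lambda>t. t \<le> x) ts = filter (\<lambda>t. t \<le> y) ts"
        proof (rule filter_cong[OF refl])
          fix t' assume "t' \<in> set ts"
          then show "(t' \<le> x) = (t' \<le> y)" using True xy by (cases "x < t'") auto
        qed
        then have pi: "piece_index ts y = piece_index ts x" by (simp add: piece_index_def)
        have "L y - L x = sl ! piece_index ts x * (y - x)" using Lx[of x] Lx[of y] pi by (simp add: algebra_simps)
        then have "\<bar>L y - L x\<bar> = \<bar>sl ! piece_index ts x\<bar> * (y - x)" using xy by (simp add: abs_mult)
        also have "\<dots> \<le> M * (y - x)" using slM xy by (intro mult_right_mono) auto
        finally show ?thesis .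
      next
        case False
        define t where "t = Min ?S"
        have tS: "t \<in> ?S" using False finS unfolding t_def by (intro Min_in) auto
        have tmin: "\<And>t'. t' \<in> ?S \<Longrightarrow> t \<le> t'" using finS unfolding t_def by simp
        have xt: "x < t" "t \<le> y" using tS by auto
        let ?k = "piece_index ts x"
        have pis: "piece_index ts s = ?k" if "x \<le> s" "s < t" for s
        proof -
          have "filter (\<lambda>t. t \<le> s) ts = filter (\<lambda>t. t \<le> x) ts"
          proof (rule filter_cong[OF refl])
            fix t' assume t': "t' \<in> ?T"
            show "(t' \<le> s) = (t' \<le> x)"
            proof
              assume "t' \<le> s"
              show "t' \<le> x"
              proof (rule ccontr)
                assume "\<not> t' \<le> x"
                then have "t' \<in> ?S" using t' \<open>t' \<le> s\<close> that xt by auto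
                then have "t \<le> t'" by (rule tmin)
                then show False using \<open>t' \<le> s\<close> that by simp
              qed
            qed (use that in simp)
          qed
          then show ?thesis by (simp add: piece_index_def)
        qed
        have Lt: "L t = sl ! ?k * t + cs ! ?k"
        proof (rule left_limit_eq[OF assms(2) xt(1)])
          fix s assume s: "x < s" "s < t"
          then have "piece_index ts s = ?k" by (intro pis) auto
          then show "L s = sl ! ?k * s + cs ! ?k" using Lx[of s] by simp
        next
          show "continuous_on UNIV (\<lambda>s. sl ! ?k * s + cs ! ?k)" by (intro continuous_intros)
        qed
        have "L t - L x = sl ! ?k * (t - x)" using Lt Lx[of x] by (simp add: algebra_simps)
        then have d1: "\<bar>L t - L x\<bar> \<le> M * (t - x)"
          using slM[of x] xt by (simp add: abs_mult mult_right_mono)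
        have sub: "{t'\<in>?T. t < t' \<and> t' \<le> y} \<subset> ?S" using tS xt by auto
        have "card {t'\<in>?T. t < t' \<and> t' \<le> y} < n" using psubset_card_mono[OF finS sub] cn by simp
        then have d2: "\<bar>L y - L t\<bar> \<le> M * (y - t)" using less.IH xt(2) by blast
        have "\<bar>L y - L x\<bar> \<le> \<bar>L y - L t\<bar> + \<bar>L t - L x\<bar>" by simp
        also have "\<dots> \<le> M * (y - t) + M * (t - x)" using d1 d2 by simp
        also have "\<dots> = M * (y - x)" by (simp add: algebra_simps)
        finally show ?thesis .
      qed
    qed
  qed
  have "\<bar>L x - L y\<bar> \<le> M * \<bar>x - y\<bar>" for x y
  proof (cases "x \<le> y")
    case True
    then show ?thesis using main[of "card {t\<in>?T. x < t \<and> t \<le> y}"] by (simp add: abs_minus_commute)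
  next
    case False
    then show ?thesis using main[of "card {t\<in>?T. y < t \<and> t \<le> x}"] by simp
  qed
  then show ?thesis using M0 by (intro exI[of _ M]) simp
qed


definition actL :: "fnn \<Rightarrow> nat \<Rightarrow> real" where
  "actL F v = (SOME M. M \<ge> 0 \<and> (\<forall>x y. \<bar>fact F v x - fact F v y\<bar> \<le> M * \<bar>x - y\<bar>))"

lemma actL: assumes "fnn_rpwl F" "v < fnodes F" "v \<notin> set (fins F)"
  shows "actL F v \<ge> 0 \<and> (\<forall>x y. \<bar>fact F v x - fact F v y\<bar> \<le> actL F v * \<bar>x - y\<bar>)"
proof -
  have "rat_pwl (fact F v)" "continuous_on UNIV (fact F v)" using assms by (auto simp: fnn_rpwl_def)
  from pwl_lipschitz[OF this] show ?thesis unfolding actL_def by (rule someI_ex)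
qed

definition wsum :: "fnn \<Rightarrow> nat \<Rightarrow> real" where
  "wsum F v = (\<Sum>u\<in>{u. u < v \<and> (u, v) \<in> fedges F}. \<bar>fwt F u v\<bar>)"

definition Lam :: "fnn \<Rightarrow> real" where
  "Lam F = 1 + (\<Sum>v\<in>{v. v < fnodes F \<and> v \<notin> set (fins F)}. actL F v * wsum F v)"

lemma wsum_nonneg: "wsum F v \<ge> 0" unfolding wsum_def by (rule sum_nonneg) simp

lemma Lam_ge: assumes "fnn_rpwl F"
  shows "Lam F \<ge> 1" "v < fnodes F \<Longrightarrow> v \<notin> set (fins F) \<Longrightarrow> actL F v * wsum F v \<le> Lam F - 1"
proof -
  have nn: "\<forall>v\<in>{v. v < fnodes F \<and> v \<notin> set (fins F)}. actL F v * wsum F v \<ge> 0"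
    using actL[OF assms] wsum_nonneg by auto
  have "0 \<le> (\<Sum>v\<in>{v. v < fnodes F \<and> v \<notin> set (fins F)}. actL F v * wsum F v)"
    by (rule sum_nonneg) (use nn in blast)
  then show "Lam F \<ge> 1" unfolding Lam_def by linarith
  assume "v < fnodes F" "v \<notin> set (fins F)"
  then have "actL F v * wsum F v \<le> (\<Sum>v\<in>{v. v < fnodes F \<and> v \<notin> set (fins F)}. actL F v * wsum F v)"
    using nn by (intro member_le_sum) auto
  then show "actL F v * wsum F v \<le> Lam F - 1" unfolding Lam_def by simp
qed

lemma fnn_vals_node: "k \<notin> set (fins F) \<Longrightarrow>
  fnn_vals F x (Suc k) ! k = fact F k (fbias F k + (\<Sum>u\<in>{u. u < k \<and> (u, k) \<in> fedges F}. fwt F u k * fnn_vals F x k ! u))"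
  by (simp add: Let_def nth_append)

lemma fnn_lip_vals:
  assumes wf: "fnn_wf F" and rp: "fnn_rpwl F" and lx: "length x = length (fins F)" and ly: "length y = length (fins F)"
    and d0: "\<delta> \<ge> 0" and dxy: "\<forall>j<length (fins F). \<bar>x ! j - y ! j\<bar> \<le> \<delta>"
  shows "k \<le> fnodes F \<Longrightarrow> \<forall>u<k. \<bar>fnn_vals F x k ! u - fnn_vals F y k ! u\<bar> \<le> Lam F ^ k * \<delta>"
proof (induction k)
  case 0 then show ?case by simp
next
  case (Suc k)
  then have IH: "\<forall>u<k. \<bar>fnn_vals F x k ! u - fnn_vals F y k ! u\<bar> \<le> Lam F ^ k * \<delta>" by simp
  have kn: "k < fnodes F" using Suc.prems by simp
  have L1: "Lam F \<ge> 1" using Lam_ge[OF rp] by simp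
  have mono: "Lam F ^ k * \<delta> \<le> Lam F ^ Suc k * \<delta>"
    using L1 d0 by (intro mult_right_mono) (auto intro: power_increasing)
  have new: "\<bar>fnn_vals F x (Suc k) ! k - fnn_vals F y (Suc k) ! k\<bar> \<le> Lam F ^ Suc k * \<delta>"
  proof (cases "k \<in> set (fins F)")
    case True
    let ?j = "THE j. j < length (fins F) \<and> fins F ! j = k"
    have "?j < length (fins F)" using the_idx[of "fins F" k] wf True by (simp add: fnn_wf_def)
    then have "\<bar>fnn_vals F x (Suc k) ! k - fnn_vals F y (Suc k) ! k\<bar> \<le> \<delta>"
      using True dxy by (simp add: Let_def nth_append)
    also have "\<delta> \<le> Lam F ^ Suc k * \<delta>"
    proof -
      have "1 \<le> Lam F ^ Suc k" using L1 by (rule one_le_power)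
      then show ?thesis using d0 by (metis mult_le_cancel_right1 mult.commute order_refl mult_right_mono mult_1)
    qed
    finally show ?thesis .
  next
    case False
    let ?S = "{u. u < k \<and> (u, k) \<in> fedges F}"
    let ?ax = "fbias F k + (\<Sum>u\<in>?S. fwt F u k * fnn_vals F x k ! u)"
    let ?ay = "fbias F k + (\<Sum>u\<in>?S. fwt F u k * fnn_vals F y k ! u)"
    have al: "actL F k \<ge> 0" "\<And>a c. \<bar>fact F k a - fact F k c\<bar> \<le> actL F k * \<bar>a - c\<bar>"
      using actL[OF rp kn False] by auto
    have "\<bar>?ax - ?ay\<bar> = \<bar>\<Sum>u\<in>?S. fwt F u k * (fnn_vals F x k ! u - fnn_vals F y k ! u)\<bar>"
      by (simp add: sum_subtractf[symmetric] algebra_simps)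
    also have "\<dots> \<le> (\<Sum>u\<in>?S. \<bar>fwt F u k\<bar> * \<bar>fnn_vals F x k ! u - fnn_vals F y k ! u\<bar>)"
      by (rule order_trans[OF sum_abs]) (simp add: abs_mult)
    also have "\<dots> \<le> (\<Sum>u\<in>?S. \<bar>fwt F u k\<bar> * (Lam F ^ k * \<delta>))"
      using IH by (intro sum_mono mult_left_mono) auto
    also have "\<dots> = wsum F k * (Lam F ^ k * \<delta>)" by (simp add: wsum_def sum_distrib_right)
    finally have da: "\<bar>?ax - ?ay\<bar> \<le> wsum F k * (Lam F ^ k * \<delta>)" .
    have "\<bar>fnn_vals F x (Suc k) ! k - fnn_vals F y (Suc k) ! k\<bar> = \<bar>fact F k ?ax - fact F k ?ay\<bar>"
      unfolding fnn_vals_node[OF False] by (rule refl)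
    also have "\<dots> \<le> actL F k * \<bar>?ax - ?ay\<bar>" by (rule al(2))
    also have "\<dots> \<le> actL F k * (wsum F k * (Lam F ^ k * \<delta>))" using da al(1) by (rule mult_left_mono)
    also have "\<dots> = (actL F k * wsum F k) * (Lam F ^ k * \<delta>)" by simp
    also have "\<dots> \<le> Lam F * (Lam F ^ k * \<delta>)"
      using Lam_ge(2)[OF rp kn False] d0 L1 by (intro mult_right_mono) auto
    also have "\<dots> = Lam F ^ Suc k * \<delta>" by simp
    finally show ?thesis .
  qed
  show ?case
  proof (intro allI impI)
    fix u assume "u < Suc k"
    show "\<bar>fnn_vals F x (Suc k) ! u - fnn_vals F y (Suc k) ! u\<bar> \<le> Lam F ^ Suc k * \<delta>"
    proof (cases "u < k")
      case True
      then have "fnn_vals F x (Suc k) ! u = fnn_vals F x k ! u" "fnn_vals F y (Suc k) ! u = fnn_vals F y k ! u"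
        by (simp_all add: Let_def nth_append)
      then show ?thesis using IH True mono by fastforce
    next
      case False then have "u = k" using \<open>u < Suc k\<close> by simp
      then show ?thesis using new by simp
    qed
  qed
qed

definition lipF :: "fnn \<Rightarrow> real" where "lipF F = Lam F ^ fnodes F"

lemma lipF_ge1: "fnn_rpwl F \<Longrightarrow> lipF F \<ge> 1"
  unfolding lipF_def using Lam_ge(1) by (simp add: one_le_power)

lemma fnn_lip:
  assumes wf: "fnn_wf F" and rp: "fnn_rpwl F" and lx: "length x = length (fins F)" and ly: "length y = length (fins F)"
    and d0: "\<delta> \<ge> 0" and dxy: "\<forall>j<length (fins F). \<bar>x ! j - y ! j\<bar> \<le> \<delta>"
  shows "\<forall>i<length (fouts F). \<bar>fnn_eval F x ! i - fnn_eval F y ! i\<bar> \<le> lipF F * \<delta>"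
proof (intro allI impI)
  fix i assume i: "i < length (fouts F)"
  have "fouts F ! i < fnodes F" using wf nth_mem[OF i] by (auto simp: fnn_wf_def)
  then show "\<bar>fnn_eval F x ! i - fnn_eval F y ! i\<bar> \<le> lipF F * \<delta>"
    using fnn_lip_vals[OF assms, of "fnodes F"] i by (simp add: fnn_eval_def lipF_def)
qed


lemma mean_alg: "(d::real) \<noteq> 0 \<Longrightarrow> D \<noteq> 0 \<Longrightarrow> (a - c) / D - ((p - n) / D) / d = ((a - p / d) - (c - n / d)) / D"
  by (simp add: field_simps)


lemma vvar_minus_X2: "A - {X2} \<subseteq> {X1}"
proof
  fix x assume "x \<in> A - {X2}" then show "x \<in> {X1}" by (cases x) auto
qed

lemma div_bound: assumes "(d::nat) > 0"
  shows "real m / real d - 1 < real (m div d)" "real (m div d) \<le> real m / real d"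
proof -
  have e: "real m / real d = real (m div d) + real (m mod d) / real d" by (rule of_nat_of_nat_div_aux)
  have "real (m mod d) < real d" using assms by simp
  then have "real (m mod d) / real d < 1" using assms by simp
  then show "real m / real d - 1 < real (m div d)" using e by linarith
  show "real (m div d) \<le> real m / real d" by (rule of_nat_div_le_of_nat)
qed

lemma nbr_upd[simp]: "nbr V E (\<alpha>(X2 := c)) = nbr V E \<alpha>" by (simp add: nbr_def)

context scl begin

definition swT :: "trip \<Rightarrow> trip" where "swT T = (case T of (P, N, e) \<Rightarrow> (swt P, swt N, e))"
lemma swT_tv[simp]: "tv V E b \<alpha> (swT T) = tv V E b (\<alpha> \<circ> other) T"
  by (simp add: swT_def tv_def sw_eval split: prod.splits)
lemma swT_ok: "okT p S T \<Longrightarrow> okT p UNIV (swT T)"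
  by (simp add: swT_def okT_def okt_def sw_fn sw_ps split: prod.splits)

fun sagg :: "aggr \<Rightarrow> trip \<Rightarrow> trip" where
  "sagg AggSum (P, N, e) = (nsum P, nsum N, e)"
| "sagg AggMean (P, N, e) = (tdiv (nsum P) ndeg, tdiv (nsum N) ndeg, e)"
| "sagg AggMax (P, N, e) = (nmax (NPlus P (tsub (nsum N) N)), nsum N, e)"

lemma sagg_ok: assumes "okT p S T" shows "okT p {X1} (sagg a T)"
proof -
  obtain P N e where T: "T = (P, N, e)" by (cases T) auto
  have h: "fnt P = {}" "fnt N = {}" "pst P \<subseteq> {..<p}" "pst N \<subseteq> {..<p}" using assms T by (auto simp: okT_def okt_def)
  have v: "insert X1 (A - {X2}) \<subseteq> {X1}" for A using vvar_minus_X2[of A] by auto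
  show ?thesis using h v by (cases a) (auto simp: T okT_def okt_def)
qed

lemma sagg_sum: assumes "finite V" "okT p S T"
  shows "tv V E b \<alpha> (sagg AggSum T) = (\<Sum>c\<in>nbr V E \<alpha>. tv V E b (\<alpha>(X2 := c)) T)"
proof -
  obtain P N e where T: "T = (P, N, e)" by (cases T) auto
  show ?thesis using assms(1)
    by (simp add: T tv_def nsum_ev sum_subtractf[symmetric] sum_divide_distrib)
qed

lemma sagg_max: assumes "finite V" "okT p S T" "card V > 0"
  shows "tv V E b \<alpha> (sagg AggMax T) = (if nbr V E \<alpha> = {} then 0 else Max ((\<lambda>c. tv V E b (\<alpha>(X2 := c)) T) ` nbr V E \<alpha>))"
proof -
  obtain P N e where T: "T = (P, N, e)" by (cases T) auto
  have h: "fnt P = {}" "fnt N = {}" using assms T by (auto simp: okT_def okt_def)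
  let ?N = "nbr V E \<alpha>"
  let ?p = "\<lambda>c. ev V E b (\<alpha>(X2 := c)) P"
  let ?n = "\<lambda>c. ev V E b (\<alpha>(X2 := c)) N"
  define S where "S = (\<Sum>c\<in>?N. ?n c)"
  have fin: "finite ?N" using assms(1) by (simp add: nbr_def)
  have SN: "ev V E b \<alpha> (nsum N) = S" using nsum_ev[OF assms(1)] by (simp add: S_def)
  have SNc: "ev V E b (\<alpha>(X2 := c)) (nsum N) = S" for c using nsum_ev[OF assms(1)] by (simp add: S_def)
  have nS: "c \<in> ?N \<Longrightarrow> ?n c \<le> S" for c unfolding S_def using fin by (intro member_le_sum) auto
  let ?g = "\<lambda>c. ?p c + (S - ?n c)"
  have fnt_t: "fnt (NPlus P (tsub (nsum N) N)) = {}" using h by simp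
  have mx: "ev V E b \<alpha> (nmax (NPlus P (tsub (nsum N) N))) = (if ?N = {} then 0 else Max (?g ` ?N))"
    using nmax_ev[OF assms(1) fnt_t] h SNc by (simp add: tsub_ev)
  have R: "Rv V > 0" using Rv_pos assms(3) by blast
  show ?thesis
  proof (cases "?N = {}")
    case True
    then have "S = 0" by (simp add: S_def)
    then show ?thesis using True mx SN by (simp add: T tv_def)
  next
    case False
    define f where "f = (\<lambda>n::nat. (real n - real S) / (2 ^ e * Rv V))"
    have mono: "mono f" unfolding f_def using R by (intro monoI divide_right_mono) auto
    have "tv V E b \<alpha> (sagg AggMax T) = f (Max (?g ` ?N))"
      using mx SN False by (simp add: T tv_def f_def)
    also have "\<dots> = Max (f ` ?g ` ?N)" using mono fin False by (intro mono_Max_commute) auto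
    also have "f ` ?g ` ?N = (\<lambda>c. tv V E b (\<alpha>(X2 := c)) T) ` ?N"
      unfolding image_image
    proof (rule image_cong[OF refl])
      fix c assume "c \<in> ?N"
      then have "?n c \<le> S" by (rule nS)
      then have "real (?p c + (S - ?n c)) = real (?p c) - real (?n c) + real S" by (simp add: of_nat_diff)
      then show "f (?g c) = tv V E b (\<alpha>(X2 := c)) T" by (simp add: f_def T tv_def)
    qed
    finally show ?thesis using False by simp
  qed
qed

lemma sagg_mean: assumes "finite V" "okT p S T" "card V > 0"
  shows "\<bar>tv V E b \<alpha> (sagg AggMean T) - (if nbr V E \<alpha> = {} then 0 else (\<Sum>c\<in>nbr V E \<alpha>. tv V E b (\<alpha>(X2 := c)) T) / real (card (nbr V E \<alpha>)))\<bar> \<le> 1 / Rv V"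
proof -
  obtain P N e where T: "T = (P, N, e)" by (cases T) auto
  have h: "fnt P = {}" "fnt N = {}" using assms T by (auto simp: okT_def okt_def)
  let ?N = "nbr V E \<alpha>"
  define SP where "SP = (\<Sum>c\<in>?N. ev V E b (\<alpha>(X2 := c)) P)"
  define SN where "SN = (\<Sum>c\<in>?N. ev V E b (\<alpha>(X2 := c)) N)"
  define d where "d = card ?N"
  have fin: "finite ?N" using assms(1) by (simp add: nbr_def)
  have R: "Rv V > 0" using Rv_pos assms(3) by blast
  have evP: "ev V E b \<alpha> (tdiv (nsum P) ndeg) = (if d = 0 then SP else SP div d)"
    using h assms(1) by (simp add: tdiv_ev nsum_ev ndeg_ev SP_def d_def)
  have evN: "ev V E b \<alpha> (tdiv (nsum N) ndeg) = (if d = 0 then SN else SN div d)"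
    using h assms(1) by (simp add: tdiv_ev nsum_ev ndeg_ev SN_def d_def)
  have sumtv: "(\<Sum>c\<in>?N. tv V E b (\<alpha>(X2 := c)) T) = (real SP - real SN) / (2 ^ e * Rv V)"
    by (simp add: T tv_def SP_def SN_def sum_subtractf[symmetric] sum_divide_distrib)
  show ?thesis
  proof (cases "?N = {}")
    case True
    then have "SP = 0" "SN = 0" "d = 0" by (simp_all add: SP_def SN_def d_def)
    then show ?thesis using True evP evN R by (simp add: T tv_def)
  next
    case False
    then have d0: "d > 0" using fin by (simp add: d_def card_gt_0_iff)
    define D where "D = 2 ^ e * Rv V"
    have D0: "D > 0" using R by (simp add: D_def)
    have "tv V E b \<alpha> (sagg AggMean T) - (\<Sum>c\<in>?N. tv V E b (\<alpha>(X2 := c)) T) / real d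
        = ((real (SP div d) - real SP / real d) - (real (SN div d) - real SN / real d)) / D"
    proof -
      have "tv V E b \<alpha> (sagg AggMean T) = (real (SP div d) - real (SN div d)) / D"
        using evP evN d0 by (simp add: T tv_def D_def)
      then show ?thesis unfolding sumtv[folded D_def] by (simp only:) (rule mean_alg, use d0 D0 in auto)
    qed
    moreover have "\<bar>(real (SP div d) - real SP / real d) - (real (SN div d) - real SN / real d)\<bar> \<le> 1"
      using div_bound[OF d0, of SP] div_bound[OF d0, of SN] by linarith
    ultimately have "\<bar>tv V E b \<alpha> (sagg AggMean T) - (\<Sum>c\<in>?N. tv V E b (\<alpha>(X2 := c)) T) / real d\<bar> \<le> 1 / D"
      using D0 by (simp add: abs_divide divide_right_mono)
    also have "1 / D \<le> 1 / Rv V" unfolding D_def using R by (simp add: divide_simps)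
    finally show ?thesis using False by (simp add: d_def)
  qed
qed

end


lemma Max_diff_le:
  fixes f g :: "'a \<Rightarrow> real"
  assumes "finite N" "N \<noteq> {}" "\<forall>c\<in>N. \<bar>f c - g c\<bar> \<le> \<epsilon>"
  shows "\<bar>Max (f ` N) - Max (g ` N)\<bar> \<le> \<epsilon>"
proof -
  have 1: "Max (f ` N) \<le> Max (g ` N) + \<epsilon>" if "\<forall>c\<in>N. \<bar>f c - g c\<bar> \<le> \<epsilon>" for f g :: "'a \<Rightarrow> real"
  proof -
    have "Max (f ` N) \<in> f ` N" using assms(1,2) by (intro Max_in) auto
    then obtain c where c: "c \<in> N" "Max (f ` N) = f c" by auto
    have "g c \<le> Max (g ` N)" using assms(1) c(1) by (intro Max_ge) auto
    then show ?thesis using c that by fastforce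
  qed
  have "Max (f ` N) \<le> Max (g ` N) + \<epsilon>" using 1 assms(3) by blast
  moreover have "Max (g ` N) \<le> Max (f ` N) + \<epsilon>" using 1[of g f] assms(3) by (simp add: abs_minus_commute)
  ultimately show ?thesis by linarith
qed

lemma sum_diff_le:
  fixes f g :: "'a \<Rightarrow> real"
  assumes "\<forall>c\<in>N. \<bar>f c - g c\<bar> \<le> \<epsilon>"
  shows "\<bar>sum f N - sum g N\<bar> \<le> real (card N) * \<epsilon>"
proof -
  have "\<bar>sum f N - sum g N\<bar> = \<bar>\<Sum>c\<in>N. f c - g c\<bar>" by (simp add: sum_subtractf)
  also have "\<dots> \<le> (\<Sum>c\<in>N. \<bar>f c - g c\<bar>)" by (rule sum_abs)
  also have "\<dots> \<le> (\<Sum>c\<in>N. \<epsilon>)" using assms by (intro sum_mono) auto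
  also have "\<dots> = real (card N) * \<epsilon>" by simp
  finally show ?thesis .
qed

lemma okT_mono: "okT p S T \<Longrightarrow> S \<subseteq> S' \<Longrightarrow> okT p S' T"
  by (auto simp: okT_def okt_def split: prod.splits)

lemma nth_append_split: "j < length xs + length ys \<Longrightarrow> (xs @ ys) ! j = (if j < length xs then xs ! j else ys ! (j - length xs))"
  by (simp add: nth_append)

context scl begin

definition slayer :: "gnn_layer \<Rightarrow> trip list \<Rightarrow> trip list" where
  "slayer L T = (let M = seval (lmsg L) (T @ map swT T) in seval (lcomb L) (T @ map (sagg (lagg L)) M))"

lemma graph_card: "graph V E \<Longrightarrow> card V > 0" "graph V E \<Longrightarrow> finite V"
  by (auto simp: graph_def card_gt_0_iff)

lemma slayer_correct:
  assumes G: "graph V E" and lw: "layer_wf d q L" and rpm: "fnn_rpwl (lmsg L)" and rpc: "fnn_rpwl (lcomb L)"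
    and lT: "length T = d" and okT: "\<forall>i<d. okT p {X1} (T ! i)" and lX: "\<forall>v\<in>V. length (X v) = d"
    and d0: "\<delta> \<ge> 0"
    and H: "\<forall>\<alpha>. \<alpha> X1 \<in> V \<longrightarrow> (\<forall>i<d. \<bar>tv V E b \<alpha> (T ! i) - X (\<alpha> X1) ! i\<bar> \<le> \<delta>)"
  shows "length (slayer L T) = q" "\<forall>i<q. okT p {X1} (slayer L T ! i)"
    "\<forall>v\<in>V. length (apply_layer V E L X v) = q"
    "\<forall>\<alpha>. \<alpha> X1 \<in> V \<longrightarrow> (\<forall>i<q. \<bar>tv V E b \<alpha> (slayer L T ! i) - apply_layer V E L X (\<alpha> X1) ! i\<bar>
        \<le> lipF (lcomb L) * (real (card V) * lipF (lmsg L) * \<delta> + 1 / Rv V))"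
proof -
  let ?Fm = "lmsg L" and ?Fc = "lcomb L"
  let ?dm = "length (fouts ?Fm)"
  have wfm: "fnn_wf ?Fm" and wfc: "fnn_wf ?Fc" and lim: "length (fins ?Fm) = 2 * d"
    and lic: "length (fins ?Fc) = d + ?dm" and loc: "length (fouts ?Fc) = q"
    using lw lT by (auto simp: layer_wf_def)
  have cV: "card V > 0" and fV: "finite V" using graph_card[OF G] by auto
  let ?Tin = "T @ map swT T"
  let ?M = "seval ?Fm ?Tin"
  let ?G = "map (sagg (lagg L)) ?M"
  define yv where "yv = (\<lambda>\<alpha>. map (tv V E b \<alpha>) T)"
  have okin: "\<forall>j<length ?Tin. okT p UNIV (?Tin ! j)"
  proof (intro allI impI)
    fix j assume j: "j < length ?Tin"
    show "okT p UNIV (?Tin ! j)"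
    proof (cases "j < d")
      case True then show ?thesis using okT lT by (auto simp: nth_append intro: okT_mono)
    next
      case False
      then have jd: "j - d < d" using j lT by simp
      then have "okT p {X1} (T ! (j - d))" using okT by blast
      then show ?thesis using False lT jd by (simp add: nth_append swT_ok)
    qed
  qed
  have Mex: "length ?M = ?dm \<and> (\<forall>i<?dm. tv V E b \<alpha> (?M ! i) = fnn_eval ?Fm (yv \<alpha> @ yv (\<alpha> \<circ> other)) ! i \<and> okT p UNIV (?M ! i))" for \<alpha>
  proof -
    have "\<forall>j<length ?Tin. tv V E b \<alpha> (?Tin ! j) = (yv \<alpha> @ yv (\<alpha> \<circ> other)) ! j \<and> okT p UNIV (?Tin ! j)"
      using okin lT by (auto simp: yv_def nth_append)
    from seval_correct[OF wfm rpm _ _ this cV] lim lT show ?thesis by (simp add: yv_def)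
  qed
  have lM: "length ?M = ?dm" using Mex by blast
  have okG: "\<forall>i<?dm. okT p {X1} (?G ! i)" using Mex lM by (auto intro: sagg_ok)
  have okC0: "\<forall>j<length (T @ ?G). okT p {X1} ((T @ ?G) ! j)"
    using okT okG lT lM by (auto simp: nth_append)
  have Cex: "length (slayer L T) = q \<and> (\<forall>i<q. tv V E b \<alpha> (slayer L T ! i) = fnn_eval ?Fc (yv \<alpha> @ map (tv V E b \<alpha>) ?G) ! i \<and> okT p {X1} (slayer L T ! i))" for \<alpha>
  proof -
    have "\<forall>j<length (T @ ?G). tv V E b \<alpha> ((T @ ?G) ! j) = (yv \<alpha> @ map (tv V E b \<alpha>) ?G) ! j \<and> okT p {X1} ((T @ ?G) ! j)"
      using okC0 lT by (auto simp: yv_def nth_append)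
    from seval_correct[OF wfc rpc _ _ this cV] lic lT lM loc show ?thesis
      by (simp add: yv_def slayer_def Let_def)
  qed
  show "length (slayer L T) = q" using Cex by blast
  show "\<forall>i<q. okT p {X1} (slayer L T ! i)" using Cex by blast
  show "\<forall>v\<in>V. length (apply_layer V E L X v) = q" by (simp add: apply_layer_def fnn_eval_def loc)
  show "\<forall>\<alpha>. \<alpha> X1 \<in> V \<longrightarrow> (\<forall>i<q. \<bar>tv V E b \<alpha> (slayer L T ! i) - apply_layer V E L X (\<alpha> X1) ! i\<bar>
        \<le> lipF (lcomb L) * (real (card V) * lipF (lmsg L) * \<delta> + 1 / Rv V))"
  proof (intro allI impI)
    fix \<alpha> i assume aV: "\<alpha> X1 \<in> V" and iq: "i < q"
    let ?v = "\<alpha> X1"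
    let ?N = "nbr V E \<alpha>"
    have Nv: "?N = {w \<in> V. E ?v w}" by (simp add: nbr_def)
    have NV: "?N \<subseteq> V" by (auto simp: nbr_def)
    have finN: "finite ?N" using fV NV finite_subset by blast
    have cardN: "card ?N \<le> card V" by (rule card_mono[OF fV NV])
    let ?mX = "\<lambda>w. fnn_eval ?Fm (X ?v @ X w)"
    let ?aggX = "aggregate (lagg L) ?dm {w \<in> V. E ?v w} ?mX"
    have Lm: "lipF ?Fm \<ge> 1" "lipF ?Fc \<ge> 1" using lipF_ge1 rpm rpc by auto
    have R: "Rv V > 0" using Rv_pos cV by blast
    have r0: "1 / Rv V > 0" using R by simp
    have cV1: "real (card V) \<ge> 1" using cV by simp
    have cl1: "1 \<le> real (card V) * lipF ?Fm"
    proof -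
      have "1 * 1 \<le> real (card V) * lipF ?Fm" using cV1 Lm(1) by (intro mult_mono) auto
      then show ?thesis by simp
    qed
    have dle: "\<delta> \<le> real (card V) * lipF ?Fm * \<delta>"
    proof -
      have "1 * \<delta> \<le> (real (card V) * lipF ?Fm) * \<delta>" using cl1 d0 by (intro mult_right_mono) auto
      then show ?thesis by simp
    qed
    have ldle: "lipF ?Fm * \<delta> \<le> real (card V) * lipF ?Fm * \<delta>"
    proof -
      have "1 * (lipF ?Fm * \<delta>) \<le> real (card V) * (lipF ?Fm * \<delta>)" using cV1 Lm(1) d0 by (intro mult_right_mono) auto
      then show ?thesis by (simp add: mult.assoc)
    qed
    define \<eta> where "\<eta> = real (card V) * lipF ?Fm * \<delta> + 1 / Rv V"
    have A: "\<bar>tv V E b (\<alpha>(X2 := c)) (?M ! j) - ?mX c ! j\<bar> \<le> lipF ?Fm * \<delta>" if c: "c \<in> ?N" and j: "j < ?dm" for c j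
    proof -
      let ?a = "\<alpha>(X2 := c)"
      have cV': "c \<in> V" using c NV by blast
      have e1: "tv V E b ?a (?M ! j) = fnn_eval ?Fm (yv ?a @ yv (?a \<circ> other)) ! j" using Mex j by blast
      have inp: "\<forall>k<length (fins ?Fm). \<bar>(yv ?a @ yv (?a \<circ> other)) ! k - (X ?v @ X c) ! k\<bar> \<le> \<delta>"
      proof (intro allI impI)
        fix k assume k: "k < length (fins ?Fm)"
        show "\<bar>(yv ?a @ yv (?a \<circ> other)) ! k - (X ?v @ X c) ! k\<bar> \<le> \<delta>"
        proof (cases "k < d")
          case True
          have "?a X1 = ?v" by simp
          then have "\<bar>tv V E b ?a (T ! k) - X ?v ! k\<bar> \<le> \<delta>" using H aV True by (metis fun_upd_other vvar.distinct(1))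
          then show ?thesis using True lT lX aV by (simp add: yv_def nth_append)
        next
          case False
          have k2: "k - d < d" using k lim False by simp
          have "(?a \<circ> other) X1 = c" by simp
          then have "\<bar>tv V E b (?a \<circ> other) (T ! (k - d)) - X c ! (k - d)\<bar> \<le> \<delta>" using H cV' k2 by metis
          then show ?thesis using False lT lX aV cV' k2 by (simp add: yv_def nth_append)
        qed
      qed
      have "\<bar>fnn_eval ?Fm (yv ?a @ yv (?a \<circ> other)) ! j - fnn_eval ?Fm (X ?v @ X c) ! j\<bar> \<le> lipF ?Fm * \<delta>"
        using fnn_lip[OF wfm rpm _ _ d0 inp] lim lT lX aV cV' j by (simp add: yv_def)
      then show ?thesis using e1 by simp
    qed
    have B: "\<bar>tv V E b \<alpha> (?G ! j) - ?aggX ! j\<bar> \<le> \<eta>" if j: "j < ?dm" for j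
    proof -
      have okM: "okT p UNIV (?M ! j)" using Mex j by blast
      have Gj: "?G ! j = sagg (lagg L) (?M ! j)" using lM j by simp
      let ?Y = "\<lambda>c. tv V E b (\<alpha>(X2 := c)) (?M ! j)"
      let ?Z = "\<lambda>c. ?mX c ! j"
      have AN: "\<forall>c\<in>?N. \<bar>?Y c - ?Z c\<bar> \<le> lipF ?Fm * \<delta>" using A j by blast
      have ld: "lipF ?Fm * \<delta> \<ge> 0" using Lm d0 by simp
      have small: "lipF ?Fm * \<delta> \<le> \<eta>" using ldle r0 unfolding \<eta>_def by linarith
      show ?thesis
      proof (cases "lagg L")
        case AggSum
        have "tv V E b \<alpha> (?G ! j) = (\<Sum>c\<in>?N. ?Y c)" using Gj AggSum sagg_sum[OF fV okM] by simp
        moreover have "?aggX ! j = (\<Sum>c\<in>?N. ?Z c)" using AggSum j Nv by simp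
        ultimately have "\<bar>tv V E b \<alpha> (?G ! j) - ?aggX ! j\<bar> \<le> real (card ?N) * (lipF ?Fm * \<delta>)"
          using sum_diff_le[OF AN] by simp
        also have "\<dots> \<le> real (card V) * (lipF ?Fm * \<delta>)" using cardN ld by (intro mult_right_mono) auto
        also have "\<dots> \<le> \<eta>" using r0 unfolding \<eta>_def by (simp add: mult.assoc)
        finally show ?thesis .
      next
        case AggMean
        have m1: "\<bar>tv V E b \<alpha> (?G ! j) - (if ?N = {} then 0 else (\<Sum>c\<in>?N. ?Y c) / real (card ?N))\<bar> \<le> 1 / Rv V"
          using Gj AggMean sagg_mean[OF fV okM cV] by simp
        have m2: "?aggX ! j = (if ?N = {} then 0 else (\<Sum>c\<in>?N. ?Z c) / real (card ?N))" using AggMean j Nv by auto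
        have m3: "\<bar>(if ?N = {} then 0 else (\<Sum>c\<in>?N. ?Y c) / real (card ?N)) - (if ?N = {} then 0 else (\<Sum>c\<in>?N. ?Z c) / real (card ?N))\<bar> \<le> lipF ?Fm * \<delta>"
        proof (cases "?N = {}")
          case True then show ?thesis using ld by simp
        next
          case False
          then have cN: "real (card ?N) > 0" using finN by (simp add: card_gt_0_iff)
          have "\<bar>(\<Sum>c\<in>?N. ?Y c) / real (card ?N) - (\<Sum>c\<in>?N. ?Z c) / real (card ?N)\<bar> = \<bar>(\<Sum>c\<in>?N. ?Y c) - (\<Sum>c\<in>?N. ?Z c)\<bar> / real (card ?N)"
            by (simp add: diff_divide_distrib[symmetric] abs_divide)
          also have "\<dots> \<le> (real (card ?N) * (lipF ?Fm * \<delta>)) / real (card ?N)"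
            using sum_diff_le[OF AN] cN by (intro divide_right_mono) auto
          also have "\<dots> = lipF ?Fm * \<delta>" using cN by simp
          finally show ?thesis using False by simp
        qed
        have "\<bar>tv V E b \<alpha> (?G ! j) - ?aggX ! j\<bar> \<le> 1 / Rv V + lipF ?Fm * \<delta>" using m1 m2 m3 by linarith
        also have "\<dots> \<le> \<eta>"
          using ldle unfolding \<eta>_def by simp
        finally show ?thesis .
      next
        case AggMax
        have x1: "tv V E b \<alpha> (?G ! j) = (if ?N = {} then 0 else Max (?Y ` ?N))"
          using Gj AggMax sagg_max[OF fV okM cV] by simp
        have x2: "?aggX ! j = (if ?N = {} then 0 else Max (?Z ` ?N))" using AggMax j Nv by auto
        have "\<bar>tv V E b \<alpha> (?G ! j) - ?aggX ! j\<bar> \<le> lipF ?Fm * \<delta>"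
        proof (cases "?N = {}")
          case True then show ?thesis using x1 x2 ld by simp
        next
          case False then show ?thesis using x1 x2 Max_diff_le[OF finN False AN] by simp
        qed
        then show ?thesis using small by linarith
      qed
    qed
    have ey: "tv V E b \<alpha> (slayer L T ! i) = fnn_eval ?Fc (yv \<alpha> @ map (tv V E b \<alpha>) ?G) ! i" using Cex iq by blast
    have ax: "apply_layer V E L X ?v = fnn_eval ?Fc (X ?v @ ?aggX)" by (simp add: apply_layer_def)
    have lagg: "length ?aggX = ?dm" by (cases "lagg L") auto
    have eta0: "\<delta> \<le> \<eta>"
      using dle r0 unfolding \<eta>_def by linarith
    have inp: "\<forall>k<length (fins ?Fc). \<bar>(yv \<alpha> @ map (tv V E b \<alpha>) ?G) ! k - (X ?v @ ?aggX) ! k\<bar> \<le> \<eta>"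
    proof (intro allI impI)
      fix k assume k: "k < length (fins ?Fc)"
      show "\<bar>(yv \<alpha> @ map (tv V E b \<alpha>) ?G) ! k - (X ?v @ ?aggX) ! k\<bar> \<le> \<eta>"
      proof (cases "k < d")
        case True
        then have "\<bar>tv V E b \<alpha> (T ! k) - X ?v ! k\<bar> \<le> \<delta>" using H aV by blast
        then show ?thesis using True lT lX aV eta0 by (simp add: yv_def nth_append)
      next
        case False
        have k2: "k - d < ?dm" using k lic False by simp
        then show ?thesis using B[OF k2] False lT lX aV lM by (simp add: yv_def nth_append)
      qed
    qed
    have eta_nn: "\<eta> \<ge> 0" using d0 eta0 by simp
    have "\<bar>fnn_eval ?Fc (yv \<alpha> @ map (tv V E b \<alpha>) ?G) ! i - fnn_eval ?Fc (X ?v @ ?aggX) ! i\<bar> \<le> lipF ?Fc * \<eta>"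
      using fnn_lip[OF wfc rpc _ _ eta_nn inp] lic lT lX aV lM lagg iq loc by (simp add: yv_def)
    then show "\<bar>tv V E b \<alpha> (slayer L T ! i) - apply_layer V E L X (\<alpha> X1) ! i\<bar>
        \<le> lipF (lcomb L) * (real (card V) * lipF (lmsg L) * \<delta> + 1 / Rv V)"
      using ey ax unfolding \<eta>_def by simp
  qed
qed

end


fun errB :: "gnn \<Rightarrow> real \<Rightarrow> real \<Rightarrow> real \<Rightarrow> real" where
  "errB [] n R \<delta> = \<delta>"
| "errB (L # Ls) n R \<delta> = errB Ls n R (lipF (lcomb L) * (n * lipF (lmsg L) * \<delta> + 1 / R))"

fun KK :: "gnn \<Rightarrow> real" where
  "KK [] = 1"
| "KK (L # Ls) = KK Ls * lipF (lcomb L) * lipF (lmsg L)"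

lemma gnn_rpwl_Cons[simp]: "gnn_rpwl (L # Ls) \<longleftrightarrow> fnn_rpwl (lmsg L) \<and> fnn_rpwl (lcomb L) \<and> gnn_rpwl Ls"
  by (auto simp: gnn_rpwl_def)

lemma KK_ge1: "gnn_rpwl Ls \<Longrightarrow> KK Ls \<ge> 1"
proof (induction Ls)
  case Nil then show ?case by simp
next
  case (Cons L Ls)
  then have "KK Ls \<ge> 1" "lipF (lcomb L) \<ge> 1" "lipF (lmsg L) \<ge> 1" using lipF_ge1 by auto
  then have "1 * 1 * 1 \<le> KK Ls * lipF (lcomb L) * lipF (lmsg L)" by (intro mult_mono) auto
  then show ?case by simp
qed

lemma errB_bound: "gnn_rpwl Ls \<Longrightarrow> n \<ge> 1 \<Longrightarrow> R > 0 \<Longrightarrow> \<delta> \<ge> 0 \<Longrightarrow>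
   errB Ls n R \<delta> \<le> KK Ls * n ^ length Ls * (\<delta> + real (length Ls) / R)"
proof (induction Ls arbitrary: \<delta>)
  case Nil then show ?case by simp
next
  case (Cons L Ls)
  let ?a = "lipF (lcomb L)" and ?b = "lipF (lmsg L)"
  let ?m = "real (length Ls)"
  have a1: "?a \<ge> 1" and b1: "?b \<ge> 1" using Cons.prems lipF_ge1 by auto
  have K1: "KK Ls \<ge> 1" using Cons.prems KK_ge1 by auto
  define \<delta>' where "\<delta>' = ?a * (n * ?b * \<delta> + 1 / R)"
  have d'0: "\<delta>' \<ge> 0" unfolding \<delta>'_def using a1 b1 Cons.prems by (intro mult_nonneg_nonneg add_nonneg_nonneg) auto
  have IH: "errB Ls n R \<delta>' \<le> KK Ls * n ^ length Ls * (\<delta>' + ?m / R)"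
    using Cons.IH[OF _ Cons.prems(2,3) d'0] Cons.prems(1) by simp
  define c where "c = ?a * ?b * n"
  have bn: "?b * n \<ge> 1"
  proof -
    have "1 * 1 \<le> ?b * n" using b1 Cons.prems(2) by (intro mult_mono) auto
    then show ?thesis by simp
  qed
  have ca: "c \<ge> ?a"
  proof -
    have "?a * 1 \<le> ?a * (?b * n)" using bn a1 by (intro mult_left_mono) auto
    then show ?thesis by (simp add: c_def mult.assoc)
  qed
  have c1: "c \<ge> 1" using ca a1 by simp
  have h1: "?a + ?m \<le> c * (?m + 1)"
  proof -
    have "?m \<le> c * ?m" using c1 by (simp add: mult_le_cancel_right1)
    then show ?thesis using ca by (simp add: algebra_simps)
  qed
  have e1: "\<delta>' + ?m / R = c * \<delta> + (?a + ?m) / R"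
    unfolding \<delta>'_def c_def by (simp add: algebra_simps add_divide_distrib)
  also have "\<dots> \<le> c * \<delta> + c * (?m + 1) / R" using h1 Cons.prems(3) by (simp add: divide_right_mono)
  also have "\<dots> = c * (\<delta> + (?m + 1) / R)" by (simp add: algebra_simps)
  finally have e2: "\<delta>' + ?m / R \<le> c * (\<delta> + (?m + 1) / R)" .
  have Kn: "KK Ls * n ^ length Ls \<ge> 0" using K1 Cons.prems(2) by simp
  have "errB (L # Ls) n R \<delta> = errB Ls n R \<delta>'" by (simp add: \<delta>'_def)
  also have "\<dots> \<le> KK Ls * n ^ length Ls * (\<delta>' + ?m / R)" by (rule IH)
  also have "\<dots> \<le> KK Ls * n ^ length Ls * (c * (\<delta> + (?m + 1) / R))" using e2 Kn by (rule mult_left_mono)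
  also have "\<dots> = KK (L # Ls) * n ^ length (L # Ls) * (\<delta> + real (length (L # Ls)) / R)"
    by (simp add: c_def algebra_simps)
  finally show ?case .
qed

context scl begin

fun sgnn :: "gnn \<Rightarrow> trip list \<Rightarrow> trip list" where
  "sgnn [] T = T"
| "sgnn (L # Ls) T = sgnn Ls (slayer L T)"

lemma sgnn_correct:
  assumes "graph V E"
  shows "gnn_wf d q Ls \<Longrightarrow> gnn_rpwl Ls \<Longrightarrow> length T = d \<Longrightarrow> \<forall>i<d. okT p {X1} (T ! i) \<Longrightarrow>
    \<forall>v\<in>V. length (X v) = d \<Longrightarrow> \<delta> \<ge> 0 \<Longrightarrow>
    \<forall>\<alpha>. \<alpha> X1 \<in> V \<longrightarrow> (\<forall>i<d. \<bar>tv V E b \<alpha> (T ! i) - X (\<alpha> X1) ! i\<bar> \<le> \<delta>) \<Longrightarrow>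
    length (sgnn Ls T) = q \<and> (\<forall>i<q. okT p {X1} (sgnn Ls T ! i)) \<and>
    (\<forall>\<alpha>. \<alpha> X1 \<in> V \<longrightarrow> (\<forall>i<q. \<bar>tv V E b \<alpha> (sgnn Ls T ! i) - apply_gnn V E Ls X (\<alpha> X1) ! i\<bar> \<le> errB Ls (real (card V)) (Rv V) \<delta>))"
proof (induction Ls arbitrary: d T X \<delta>)
  case Nil then show ?case by simp
next
  case (Cons L Ls d T X \<delta>)
  from Cons.prems(1) obtain r where lw: "layer_wf d r L" and gw: "gnn_wf r q Ls" by auto
  have rpm: "fnn_rpwl (lmsg L)" and rpc: "fnn_rpwl (lcomb L)" and rps: "gnn_rpwl Ls" using Cons.prems(2) by auto
  note SL = slayer_correct[OF assms lw rpm rpc Cons.prems(3,4,5,6,7)]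
  define \<delta>' where "\<delta>' = lipF (lcomb L) * (real (card V) * lipF (lmsg L) * \<delta> + 1 / Rv V)"
  have R: "Rv V > 0" using Rv_pos graph_card[OF assms] by blast
  have d'0: "\<delta>' \<ge> 0" unfolding \<delta>'_def using lipF_ge1[OF rpm] lipF_ge1[OF rpc] Cons.prems(6) R
    by (intro mult_nonneg_nonneg add_nonneg_nonneg) auto
  have H': "\<forall>\<alpha>. \<alpha> X1 \<in> V \<longrightarrow> (\<forall>i<r. \<bar>tv V E b \<alpha> (slayer L T ! i) - apply_layer V E L X (\<alpha> X1) ! i\<bar> \<le> \<delta>')"
    using SL(4) unfolding \<delta>'_def by blast
  from Cons.IH[OF gw rps SL(1) SL(2) SL(3) d'0 H'] show ?case by (simp add: \<delta>'_def)
qed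

end


context scl begin

definition tinit :: "nat \<Rightarrow> trip list" where
  "tinit p = map (\<lambda>i. (NTimes (Cnt BNil (FPred i X1)) rterm, NZero, 0)) [0..<p]"

lemma tinit_len[simp]: "length (tinit p) = p" by (simp add: tinit_def)
lemma tinit_ok: "i < p \<Longrightarrow> okT p {X1} (tinit p ! i)"
  by (simp add: tinit_def okT_def okt_def rterm_def)
lemma tinit_tv: "card V > 0 \<Longrightarrow> i < p \<Longrightarrow> tv V E b \<alpha> (tinit p ! i) = label_signal p b (\<alpha> X1) ! i"
  using Rv_pos[of V] by (simp add: tinit_def tv_def label_signal_def)

definition ffin :: "gnn \<Rightarrow> nat \<Rightarrow> form" where
  "ffin N p = (case sgnn N (tinit p) ! 0 of (P, Nn, e) \<Rightarrow> FLe (NPlus (tmul 2 Nn) (tmul (2 ^ e) rterm)) (tmul 2 P))"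

lemma main:
  assumes rp: "gnn_rpwl N" and gc: "gnn_computes p N Q" and Ln: "Ln = length N"
    and small: "KK N * real (length N) / 2 ^ A < 1 / 4"
  shows "gfoc_definable p Q"
proof -
  have gw: "gnn_wf p 1 N" using gc by (simp add: gnn_computes_def)
  have SC: "length (sgnn N (tinit p)) = 1 \<and> (\<forall>i<1. okT p {X1} (sgnn N (tinit p) ! i)) \<and>
    (\<forall>\<alpha>. \<alpha> X1 \<in> V \<longrightarrow> (\<forall>i<1. \<bar>tv V E b \<alpha> (sgnn N (tinit p) ! i) - apply_gnn V E N (label_signal p b) (\<alpha> X1) ! i\<bar> \<le> errB N (real (card V)) (Rv V) 0))"
    if G: "graph V E" for V E b
  proof -
    have cV: "card V > 0" using graph_card[OF G] by simp
    show ?thesis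
    proof (rule sgnn_correct[OF G gw rp])
      show "\<forall>i<p. okT p {X1} (tinit p ! i)" using tinit_ok by blast
      show "\<forall>v\<in>V. length (label_signal p b v) = p" by (simp add: label_signal_def)
      show "\<forall>\<alpha>. \<alpha> X1 \<in> V \<longrightarrow> (\<forall>i<p. \<bar>tv V E b \<alpha> (tinit p ! i) - label_signal p b (\<alpha> X1) ! i\<bar> \<le> 0)"
        using tinit_tv[OF cV] by simp
    qed simp_all
  qed
  have G0: "graph {0} (\<lambda>_ _. False)" by (simp add: graph_def)
  obtain P Nn e where S0: "sgnn N (tinit p) ! 0 = (P, Nn, e)" by (cases "sgnn N (tinit p) ! 0") auto
  have ok0: "okT p {X1} (P, Nn, e)" using SC[OF G0] S0 by auto
  then have okP: "okt p {X1} P" and okN: "okt p {X1} Nn" by (auto simp: okT_def)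
  have phi: "ffin N p = FLe (NPlus (tmul 2 Nn) (tmul (2 ^ e) rterm)) (tmul 2 P)" by (simp add: ffin_def S0)
  show ?thesis unfolding gfoc_definable_def
  proof (intro exI[of _ "ffin N p"] conjI allI impI)
    show "fvf (ffin N p) \<subseteq> {X1}" using okP okN by (simp add: phi okt_def rterm_def)
    show "fnf (ffin N p) = {}" using okP okN by (simp add: phi okt_def rterm_def)
    show "psf (ffin N p) \<subseteq> {..<p}" using okP okN by (simp add: phi okt_def rterm_def)
  next
    fix V E b v \<alpha> \<beta>
    assume G: "graph V E" and vV: "v \<in> V" and av: "\<alpha> X1 = v"
    have cV: "card V > 0" using graph_card[OF G] by simp
    have R: "Rv V > 0" using Rv_pos[OF cV] .
    let ?y = "tv V E b \<alpha> (P, Nn, e)"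
    let ?out = "apply_gnn V E N (label_signal p b) v ! 0"
    have err: "\<bar>?y - ?out\<bar> \<le> errB N (real (card V)) (Rv V) 0"
      using SC[OF G] S0 vV av by auto
    have n1: "real (card V) \<ge> 1" using cV by simp
    have "errB N (real (card V)) (Rv V) 0 \<le> KK N * real (card V) ^ length N * (0 + real (length N) / Rv V)"
      by (rule errB_bound[OF rp n1 R]) simp
    also have "\<dots> = KK N * real (length N) / 2 ^ A"
    proof -
      have "Rv V = 2 ^ A * real (card V) ^ length N" by (subst Rv_def) (simp add: Ln)
      then show ?thesis using cV by (simp add: field_simps)
    qed
    finally have err2: "\<bar>?y - ?out\<bar> < 1 / 4" using err small by linarith
    have eP: "evalt V E b \<alpha> \<beta> P = ev V E b \<alpha> P" by (rule fn_indep) (use okP in \<open>simp add: okt_def\<close>)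
    have eN: "evalt V E b \<alpha> \<beta> Nn = ev V E b \<alpha> Nn" by (rule fn_indep) (use okN in \<open>simp add: okt_def\<close>)
    define Pv where "Pv = ev V E b \<alpha> P"
    define Nv where "Nv = ev V E b \<alpha> Nn"
    define Rn where "Rn = evalt V E b \<alpha> \<beta> rterm"
    have Rn: "real Rn = Rv V" unfolding Rn_def by simp
    have "sat V E b \<alpha> \<beta> (ffin N p) \<longleftrightarrow> 2 * Nv + 2 ^ e * Rn \<le> 2 * Pv"
      by (simp add: phi eP eN Pv_def Nv_def Rn_def)
    also have "\<dots> \<longleftrightarrow> real (2 * Nv + 2 ^ e * Rn) \<le> real (2 * Pv)" by (rule of_nat_le_iff[symmetric])
    also have "\<dots> \<longleftrightarrow> 2 ^ e * Rv V / 2 \<le> real Pv - real Nv" using Rn by (simp add: field_simps)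
    also have "\<dots> \<longleftrightarrow> 1 / 2 \<le> (real Pv - real Nv) / (2 ^ e * Rv V)"
      using R by (simp add: le_divide_eq field_simps)
    also have "(real Pv - real Nv) / (2 ^ e * Rv V) = ?y" by (simp add: tv_def Pv_def Nv_def)
    finally have sy: "sat V E b \<alpha> \<beta> (ffin N p) \<longleftrightarrow> 1 / 2 \<le> ?y" .
    have Qc: "(Q V E b v \<longrightarrow> ?out \<ge> 3/4) \<and> (\<not> Q V E b v \<longrightarrow> ?out \<le> 1/4)"
      using gc G vV by (simp add: gnn_computes_def)
    show "sat V E b \<alpha> \<beta> (ffin N p) \<longleftrightarrow> Q V E b v"
      using sy Qc err2 by (cases "Q V E b v") (auto simp: abs_le_iff abs_less_iff)
  qed
qed

end

theorem theorem1p4: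
  fixes p :: nat and Q :: query
  assumes "unary_query p Q"
    and "rpwl_gnn_computable p Q"
  shows "gfoc_definable p Q"
proof -
  obtain N where rp: "gnn_rpwl N" and gc: "gnn_computes p N Q"
    using assms(2) by (auto simp: rpwl_gnn_computable_def)
  obtain A where A: "4 * (KK N * real (length N)) < 2 ^ A"
    using real_arch_pow[of 2 "4 * (KK N * real (length N))"] by auto
  have "KK N * real (length N) / 2 ^ A < 1 / 4" using A by (simp add: field_simps)
  then show ?thesis using scl.main[OF rp gc refl] by blast
qed


end
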